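(* Let $\mathcal{A}$ be a semi-abelian category, and let $m:I\to A$ be a kernel (equivalently, a normal monic) in $\mathcal{A}$. The following are equivalent: (1) $m$ is an essential monic; (2) whenever $f:A\to B$ is an arrow such that $fm$ is a normal monic, $f$ is monic; (3) if $g:J\to A$ is a normal monic with $g\perp m$, then $g=0$ (i.e. $J$ is a zero object).
   Context: In a semi-abelian category, normal monics coincide with kernels; the ideals of an object $A$ are the subobjects of $A$ represented by normal monics with target $A$, and they form a bounded lattice. For normal monics (ideals) $g,m$ with target $A$, write $g\perp m$ if their meet in the lattice of ideals of $A$ is $0$ (equivalently, the pullback of $g$ and $m$ is a zero object). An arrow $m$ is an essential monic if $m$ is monic and for every arrow $g$ such that $gm$ is defined and monic, $g$ is monic. *)

theory Defs
  imports Main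
begin

section \<open>Categories (arrows of type 'a, objects of type 'o); Comp C g f means g after f\<close>

record ('o, 'a) cat =
  Obj :: "'o set"
  Arr :: "'a set"
  Dom :: "'a \<Rightarrow> 'o"
  Cod :: "'a \<Rightarrow> 'o"
  Id  :: "'o \<Rightarrow> 'a"
  Comp :: "'a \<Rightarrow> 'a \<Rightarrow> 'a"

definition category :: "('o, 'a) cat \<Rightarrow> bool" where
  "category C \<longleftrightarrow>
     (\<forall>f\<in>Arr C. Dom C f \<in> Obj C \<and> Cod C f \<in> Obj C) \<and>
     (\<forall>a\<in>Obj C. Id C a \<in> Arr C \<and> Dom C (Id C a) = a \<and> Cod C (Id C a) = a) \<and>
     (\<forall>f\<in>Arr C. \<forall>g\<in>Arr C. Cod C f = Dom C g \<longrightarrow>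
        Comp C g f \<in> Arr C \<and> Dom C (Comp C g f) = Dom C f \<and> Cod C (Comp C g f) = Cod C g) \<and>
     (\<forall>f\<in>Arr C. Comp C f (Id C (Dom C f)) = f \<and> Comp C (Id C (Cod C f)) f = f) \<and>
     (\<forall>f\<in>Arr C. \<forall>g\<in>Arr C. \<forall>h\<in>Arr C. Cod C f = Dom C g \<and> Cod C g = Dom C h \<longrightarrow>
        Comp C h (Comp C g f) = Comp C (Comp C h g) f)"

definition hom :: "('o, 'a) cat \<Rightarrow> 'o \<Rightarrow> 'o \<Rightarrow> 'a set" where
  "hom C a b = {f \<in> Arr C. Dom C f = a \<and> Cod C f = b}"

definition monic :: "('o, 'a) cat \<Rightarrow> 'a \<Rightarrow> bool" where
  "monic C m \<longleftrightarrow> m \<in> Arr C \<and>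
     (\<forall>g\<in>Arr C. \<forall>h\<in>Arr C. Cod C g = Dom C m \<and> Cod C h = Dom C m \<and> Dom C g = Dom C h \<and>
        Comp C m g = Comp C m h \<longrightarrow> g = h)"

definition iso :: "('o, 'a) cat \<Rightarrow> 'a \<Rightarrow> bool" where
  "iso C f \<longleftrightarrow> f \<in> Arr C \<and>
     (\<exists>g\<in>hom C (Cod C f) (Dom C f). Comp C g f = Id C (Dom C f) \<and> Comp C f g = Id C (Cod C f))"

definition initial :: "('o, 'a) cat \<Rightarrow> 'o \<Rightarrow> bool" where
  "initial C z \<longleftrightarrow> z \<in> Obj C \<and> (\<forall>a\<in>Obj C. \<exists>!f. f \<in> hom C z a)"

definition terminal :: "('o, 'a) cat \<Rightarrow> 'o \<Rightarrow> bool" where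
  "terminal C z \<longleftrightarrow> z \<in> Obj C \<and> (\<forall>a\<in>Obj C. \<exists>!f. f \<in> hom C a z)"

definition zero_obj :: "('o, 'a) cat \<Rightarrow> 'o \<Rightarrow> bool" where
  "zero_obj C z \<longleftrightarrow> initial C z \<and> terminal C z"

definition pointed :: "('o, 'a) cat \<Rightarrow> bool" where
  "pointed C \<longleftrightarrow> (\<exists>z. zero_obj C z)"

definition zero_arrow :: "('o, 'a) cat \<Rightarrow> 'a \<Rightarrow> bool" where
  "zero_arrow C f \<longleftrightarrow> f \<in> Arr C \<and>
     (\<exists>z. zero_obj C z \<and> (\<exists>u\<in>hom C (Dom C f) z. \<exists>v\<in>hom C z (Cod C f). f = Comp C v u))"

definition is_kernel :: "('o, 'a) cat \<Rightarrow> 'a \<Rightarrow> 'a \<Rightarrow> bool" where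
  "is_kernel C k f \<longleftrightarrow> f \<in> Arr C \<and> k \<in> Arr C \<and> Cod C k = Dom C f \<and>
     zero_arrow C (Comp C f k) \<and>
     (\<forall>x\<in>Arr C. Cod C x = Dom C f \<and> zero_arrow C (Comp C f x) \<longrightarrow>
        (\<exists>!u. u \<in> hom C (Dom C x) (Dom C k) \<and> Comp C k u = x))"

definition normal_mono :: "('o, 'a) cat \<Rightarrow> 'a \<Rightarrow> bool" where
  "normal_mono C k \<longleftrightarrow> (\<exists>f. is_kernel C k f)"

definition is_pullback :: "('o, 'a) cat \<Rightarrow> 'a \<Rightarrow> 'a \<Rightarrow> 'a \<Rightarrow> 'a \<Rightarrow> bool" where
  "is_pullback C f g p q \<longleftrightarrow> f \<in> Arr C \<and> g \<in> Arr C \<and> p \<in> Arr C \<and> q \<in> Arr C \<and>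
     Cod C f = Cod C g \<and> Cod C p = Dom C f \<and> Cod C q = Dom C g \<and> Dom C p = Dom C q \<and>
     Comp C f p = Comp C g q \<and>
     (\<forall>x\<in>Arr C. \<forall>y\<in>Arr C. Dom C x = Dom C y \<and> Cod C x = Dom C f \<and> Cod C y = Dom C g \<and>
        Comp C f x = Comp C g y \<longrightarrow>
        (\<exists>!u. u \<in> hom C (Dom C x) (Dom C p) \<and> Comp C p u = x \<and> Comp C q u = y))"

definition finitely_complete :: "('o, 'a) cat \<Rightarrow> bool" where
  "finitely_complete C \<longleftrightarrow> (\<exists>t. terminal C t) \<and>
     (\<forall>f\<in>Arr C. \<forall>g\<in>Arr C. Cod C f = Cod C g \<longrightarrow> (\<exists>p q. is_pullback C f g p q))"

definition is_coequalizer :: "('o, 'a) cat \<Rightarrow> 'a \<Rightarrow> 'a \<Rightarrow> 'a \<Rightarrow> bool" where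
  "is_coequalizer C f g e \<longleftrightarrow> f \<in> Arr C \<and> g \<in> Arr C \<and> e \<in> Arr C \<and>
     Dom C f = Dom C g \<and> Cod C f = Cod C g \<and> Dom C e = Cod C f \<and>
     Comp C e f = Comp C e g \<and>
     (\<forall>h\<in>Arr C. Dom C h = Cod C f \<and> Comp C h f = Comp C h g \<longrightarrow>
        (\<exists>!u. u \<in> hom C (Cod C e) (Cod C h) \<and> Comp C u e = h))"

definition regular_epi :: "('o, 'a) cat \<Rightarrow> 'a \<Rightarrow> bool" where
  "regular_epi C e \<longleftrightarrow> (\<exists>f g. is_coequalizer C f g e)"

definition regular :: "('o, 'a) cat \<Rightarrow> bool" where
  "regular C \<longleftrightarrow> finitely_complete C \<and>
     (\<forall>f p q. is_pullback C f f p q \<longrightarrow> (\<exists>e. is_coequalizer C p q e)) \<and>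
     (\<forall>e g p q. regular_epi C e \<and> is_pullback C e g p q \<longrightarrow> regular_epi C q)"

text \<open>Membership of generalized elements in a relation (r1, r2) : R \<rightarrow> A x A.\<close>
definition rel_mem :: "('o, 'a) cat \<Rightarrow> 'a \<Rightarrow> 'a \<Rightarrow> 'a \<Rightarrow> 'a \<Rightarrow> bool" where
  "rel_mem C r1 r2 x y \<longleftrightarrow>
     (\<exists>u\<in>Arr C. Cod C u = Dom C r1 \<and> Comp C r1 u = x \<and> Comp C r2 u = y)"

definition equiv_rel :: "('o, 'a) cat \<Rightarrow> 'a \<Rightarrow> 'a \<Rightarrow> bool" where
  "equiv_rel C r1 r2 \<longleftrightarrow> r1 \<in> Arr C \<and> r2 \<in> Arr C \<and>
     Dom C r1 = Dom C r2 \<and> Cod C r1 = Cod C r2 \<and>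
     (\<forall>u\<in>Arr C. \<forall>v\<in>Arr C. Cod C u = Dom C r1 \<and> Cod C v = Dom C r1 \<and> Dom C u = Dom C v \<and>
        Comp C r1 u = Comp C r1 v \<and> Comp C r2 u = Comp C r2 v \<longrightarrow> u = v) \<and>
     (\<forall>x\<in>Arr C. Cod C x = Cod C r1 \<longrightarrow> rel_mem C r1 r2 x x) \<and>
     (\<forall>x y. rel_mem C r1 r2 x y \<longrightarrow> rel_mem C r1 r2 y x) \<and>
     (\<forall>x y z. rel_mem C r1 r2 x y \<and> rel_mem C r1 r2 y z \<longrightarrow> rel_mem C r1 r2 x z)"

definition exact :: "('o, 'a) cat \<Rightarrow> bool" where
  "exact C \<longleftrightarrow> regular C \<and>
     (\<forall>r1 r2. equiv_rel C r1 r2 \<longrightarrow> (\<exists>f. is_pullback C f f r1 r2))"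

definition split_ext :: "('o, 'a) cat \<Rightarrow> 'a \<Rightarrow> 'a \<Rightarrow> 'a \<Rightarrow> bool" where
  "split_ext C k p s \<longleftrightarrow> p \<in> Arr C \<and> s \<in> hom C (Cod C p) (Dom C p) \<and>
     Comp C p s = Id C (Cod C p) \<and> is_kernel C k p"

text \<open>Protomodularity (pointed, finitely complete case): split short five lemma.\<close>
definition protomodular :: "('o, 'a) cat \<Rightarrow> bool" where
  "protomodular C \<longleftrightarrow>
     (\<forall>k p s k' p' s' u v w.
        split_ext C k p s \<and> split_ext C k' p' s' \<and>
        u \<in> hom C (Dom C k) (Dom C k') \<and> v \<in> hom C (Dom C p) (Dom C p') \<and>
        w \<in> hom C (Cod C p) (Cod C p') \<and>
        Comp C v k = Comp C k' u \<and> Comp C p' v = Comp C w p \<and> Comp C v s = Comp C s' w \<and>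
        iso C u \<and> iso C w \<longrightarrow> iso C v)"

definition has_bin_coproducts :: "('o, 'a) cat \<Rightarrow> bool" where
  "has_bin_coproducts C \<longleftrightarrow>
     (\<forall>a\<in>Obj C. \<forall>b\<in>Obj C. \<exists>c i j. i \<in> hom C a c \<and> j \<in> hom C b c \<and>
        (\<forall>x\<in>Arr C. \<forall>y\<in>Arr C. Dom C x = a \<and> Dom C y = b \<and> Cod C x = Cod C y \<longrightarrow>
           (\<exists>!u. u \<in> hom C c (Cod C x) \<and> Comp C u i = x \<and> Comp C u j = y)))"

definition semi_abelian :: "('o, 'a) cat \<Rightarrow> bool" where
  "semi_abelian C \<longleftrightarrow> category C \<and> pointed C \<and> exact C \<and> protomodular C \<and>
     has_bin_coproducts C"

definition perp :: "('o, 'a) cat \<Rightarrow> 'a \<Rightarrow> 'a \<Rightarrow> bool" where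
  "perp C g m \<longleftrightarrow> Cod C g = Cod C m \<and>
     (\<forall>p q. is_pullback C g m p q \<longrightarrow> zero_obj C (Dom C p))"

definition essential_mono :: "('o, 'a) cat \<Rightarrow> 'a \<Rightarrow> bool" where
  "essential_mono C m \<longleftrightarrow> monic C m \<and>
     (\<forall>g\<in>Arr C. Dom C g = Cod C m \<and> monic C (Comp C g m) \<longrightarrow> monic C g)"

end

theory Submission
  imports Defs
begin

locale sa =
  fixes C :: "('o, 'a) cat"
  assumes SA: "semi_abelian C"
begin

abbreviation arr where "arr f \<equiv> f \<in> Arr C"
abbreviation src where "src f \<equiv> Dom C f"
abbreviation trg where "trg f \<equiv> Cod C f"
abbreviation cmp :: "'a \<Rightarrow> 'a \<Rightarrow> 'a" (infixr "\<cdot>" 55) where "g \<cdot> f \<equiv> Comp C g f"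
abbreviation idn where "idn a \<equiv> Id C a"
abbreviation ob where "ob a \<equiv> a \<in> Obj C"

lemma cat: "category C" using SA unfolding semi_abelian_def by simp

lemma catD1: "\<forall>f\<in>Arr C. Dom C f \<in> Obj C \<and> Cod C f \<in> Obj C"
  using cat unfolding category_def by (elim conjE) assumption
lemma catD2: "\<forall>a\<in>Obj C. Id C a \<in> Arr C \<and> Dom C (Id C a) = a \<and> Cod C (Id C a) = a"
  using cat unfolding category_def by (elim conjE) assumption
lemma catD3: "\<forall>f\<in>Arr C. \<forall>g\<in>Arr C. Cod C f = Dom C g \<longrightarrow>
        Comp C g f \<in> Arr C \<and> Dom C (Comp C g f) = Dom C f \<and> Cod C (Comp C g f) = Cod C g"
  using cat unfolding category_def by (elim conjE) assumption
lemma catD4: "\<forall>f\<in>Arr C. Comp C f (Id C (Dom C f)) = f \<and> Comp C (Id C (Cod C f)) f = f"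
  using cat unfolding category_def by (elim conjE) assumption
lemma catD5: "\<forall>f\<in>Arr C. \<forall>g\<in>Arr C. \<forall>h\<in>Arr C. Cod C f = Dom C g \<and> Cod C g = Dom C h \<longrightarrow>
        Comp C h (Comp C g f) = Comp C (Comp C h g) f"
  using cat unfolding category_def by (elim conjE) assumption

lemma src_ob[simp]: "arr f \<Longrightarrow> ob (src f)" using catD1 by simp
lemma trg_ob[simp]: "arr f \<Longrightarrow> ob (trg f)" using catD1 by simp
lemma id_arr[simp]: "ob a \<Longrightarrow> arr (idn a)" using catD2 by simp
lemma id_src[simp]: "ob a \<Longrightarrow> src (idn a) = a" using catD2 by simp
lemma id_trg[simp]: "ob a \<Longrightarrow> trg (idn a) = a" using catD2 by simp
lemma arr_comp[simp]: "arr f \<Longrightarrow> arr g \<Longrightarrow> src g = trg f \<Longrightarrow> arr (g \<cdot> f)"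
  using catD3 by simp
lemma src_comp[simp]: "arr f \<Longrightarrow> arr g \<Longrightarrow> src g = trg f \<Longrightarrow> src (g \<cdot> f) = src f"
  using catD3 by simp
lemma trg_comp[simp]: "arr f \<Longrightarrow> arr g \<Longrightarrow> src g = trg f \<Longrightarrow> trg (g \<cdot> f) = trg g"
  using catD3 by simp
lemma comp_id[simp]: "arr f \<Longrightarrow> src f = a \<Longrightarrow> f \<cdot> idn a = f"
  using catD4 by auto
lemma id_comp[simp]: "arr f \<Longrightarrow> trg f = a \<Longrightarrow> idn a \<cdot> f = f"
  using catD4 by auto
lemma assoc[simp]: "arr f \<Longrightarrow> arr g \<Longrightarrow> arr h \<Longrightarrow> src g = trg f \<Longrightarrow> src h = trg g \<Longrightarrow>
   (h \<cdot> g) \<cdot> f = h \<cdot> g \<cdot> f"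
  using catD5 by simp

lemma hom_iff[simp]: "f \<in> hom C a b \<longleftrightarrow> arr f \<and> src f = a \<and> trg f = b"
  unfolding hom_def by auto

definition z0 where "z0 = (SOME z. zero_obj C z)"
lemma z0: "zero_obj C z0"
  unfolding z0_def using SA unfolding semi_abelian_def pointed_def by (metis someI_ex)
lemma z0_ob[simp]: "ob z0" using z0 unfolding zero_obj_def initial_def by blast

definition tz where "tz a = (THE f. f \<in> hom C a z0)"
definition iz where "iz b = (THE f. f \<in> hom C z0 b)"

lemma tz0: "ob a \<Longrightarrow> arr (tz a) \<and> src (tz a) = a \<and> trg (tz a) = z0"
proof -
  assume "ob a"
  then have "\<exists>!f. f \<in> hom C a z0" using z0 unfolding zero_obj_def terminal_def by blast
  then have "tz a \<in> hom C a z0" unfolding tz_def by (rule theI')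
  then show ?thesis by simp
qed
lemma tz[simp]: "ob a \<Longrightarrow> arr (tz a)" "ob a \<Longrightarrow> src (tz a) = a" "ob a \<Longrightarrow> trg (tz a) = z0"
  using tz0 by auto
lemma tz_uniq: "arr f \<Longrightarrow> trg f = z0 \<Longrightarrow> f = tz (src f)"
proof -
  assume a: "arr f" "trg f = z0"
  then have u: "\<exists>!g. g \<in> hom C (src f) z0" using z0 src_ob[OF a(1)] unfolding zero_obj_def terminal_def by blast
  have "f \<in> hom C (src f) z0" "tz (src f) \<in> hom C (src f) z0" using a tz[OF src_ob[OF a(1)]] by auto
  then show ?thesis using u by blast
qed
lemma iz0: "ob a \<Longrightarrow> arr (iz a) \<and> src (iz a) = z0 \<and> trg (iz a) = a"
proof -
  assume "ob a"
  then have "\<exists>!f. f \<in> hom C z0 a" using z0 unfolding zero_obj_def initial_def by blast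
  then have "iz a \<in> hom C z0 a" unfolding iz_def by (rule theI')
  then show ?thesis by simp
qed
lemma iz[simp]: "ob a \<Longrightarrow> arr (iz a)" "ob a \<Longrightarrow> src (iz a) = z0" "ob a \<Longrightarrow> trg (iz a) = a"
  using iz0 by auto
lemma iz_uniq: "arr f \<Longrightarrow> src f = z0 \<Longrightarrow> f = iz (trg f)"
proof -
  assume a: "arr f" "src f = z0"
  then have u: "\<exists>!g. g \<in> hom C z0 (trg f)" using z0 trg_ob[OF a(1)] unfolding zero_obj_def initial_def by blast
  have "f \<in> hom C z0 (trg f)" "iz (trg f) \<in> hom C z0 (trg f)" using a iz[OF trg_ob[OF a(1)]] by auto
  then show ?thesis using u by blast
qed

lemma to_z0_eq: "arr f \<Longrightarrow> arr g \<Longrightarrow> trg f = z0 \<Longrightarrow> trg g = z0 \<Longrightarrow> src f = src g \<Longrightarrow> f = g"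
  by (metis tz_uniq)

definition zr where "zr a b = iz b \<cdot> tz a"

lemma zr[simp]: "ob a \<Longrightarrow> ob b \<Longrightarrow> arr (zr a b)"
  "ob a \<Longrightarrow> ob b \<Longrightarrow> src (zr a b) = a"
  "ob a \<Longrightarrow> ob b \<Longrightarrow> trg (zr a b) = b"
  unfolding zr_def using tz iz by auto

lemma comp_zr[simp]: "arr f \<Longrightarrow> src f = b \<Longrightarrow> ob a \<Longrightarrow> f \<cdot> zr a b = zr a (trg f)"
proof -
  assume a: "arr f" "src f = b" "ob a"
  have [simp]: "ob b" using a by auto
  have "f \<cdot> zr a b = (f \<cdot> iz b) \<cdot> tz a" unfolding zr_def using a tz iz by simp
  also have "f \<cdot> iz b = iz (trg f)" using a iz[of b] iz_uniq[of "f \<cdot> iz b"] by auto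
  finally show ?thesis unfolding zr_def .
qed

lemma zr_comp[simp]: "arr f \<Longrightarrow> trg f = b \<Longrightarrow> ob c \<Longrightarrow> zr b c \<cdot> f = zr (src f) c"
proof -
  assume a: "arr f" "trg f = b" "ob c"
  have [simp]: "ob b" using a by auto
  have "zr b c \<cdot> f = iz c \<cdot> (tz b \<cdot> f)" unfolding zr_def using a tz iz by simp
  also have "tz b \<cdot> f = tz (src f)" using a tz[of b] tz_uniq[of "tz b \<cdot> f"] by auto
  finally show ?thesis unfolding zr_def .
qed

lemma zero_arrow_iff: "zero_arrow C f \<longleftrightarrow> arr f \<and> f = zr (src f) (trg f)"
proof
  assume "zero_arrow C f"
  then obtain z u v where f: "arr f" "zero_obj C z" and u: "arr u" "src u = src f" "trg u = z"
    and v: "arr v" "src v = z" "trg v = trg f" and fe: "f = v \<cdot> u"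
    unfolding zero_arrow_def hom_def by blast
  have zo: "ob z" using f unfolding zero_obj_def initial_def by blast
  obtain al where al: "arr al" "src al = z" "trg al = z0" using z0 f(2) zo unfolding zero_obj_def terminal_def hom_iff by blast
  obtain be where be: "arr be" "src be = z0" "trg be = z" using z0 f(2) zo unfolding zero_obj_def initial_def hom_iff by blast
  have "be \<cdot> al \<in> hom C z z" "idn z \<in> hom C z z" using al be zo by auto
  then have ba: "be \<cdot> al = idn z" using f(2) zo unfolding zero_obj_def initial_def by blast
  have "v \<cdot> u = v \<cdot> (be \<cdot> al) \<cdot> u" using u v ba zo by simp
  also have "\<dots> = (v \<cdot> be) \<cdot> (al \<cdot> u)" using u v al be by simp
  also have "v \<cdot> be = iz (trg f)" using iz_uniq[of "v \<cdot> be"] v be by simp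
  also have "al \<cdot> u = tz (src f)" using tz_uniq[of "al \<cdot> u"] u al by simp
  finally show "arr f \<and> f = zr (src f) (trg f)" unfolding zr_def using f fe by simp
next
  assume a: "arr f \<and> f = zr (src f) (trg f)"
  have "tz (src f) \<in> hom C (src f) z0" "iz (trg f) \<in> hom C z0 (trg f)" using a by auto
  then show "zero_arrow C f" unfolding zero_arrow_def zr_def
    using z0 a unfolding zr_def by blast
qed

lemma zr_zero_arrow: "ob a \<Longrightarrow> ob b \<Longrightarrow> zero_arrow C (zr a b)"
  unfolding zero_arrow_iff by simp

lemma zero_obj_iff: "ob a \<Longrightarrow> zero_obj C a \<longleftrightarrow> idn a = zr a a"
proof
  assume "ob a" "zero_obj C a"
  then show "idn a = zr a a" unfolding zero_obj_def initial_def
    using zr[of a a] id_arr id_src id_trg by (metis hom_iff)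
next
  assume a: "ob a" "idn a = zr a a"
  have i: "f = zr a c" if "arr f" "src f = a" "trg f = c" for f c
  proof -
    have "f = f \<cdot> idn a" using that by simp
    also have "\<dots> = zr a c" using that a by simp
    finally show ?thesis .
  qed
  have t: "f = zr c a" if "arr f" "trg f = a" "src f = c" for f c
  proof -
    have "f = idn a \<cdot> f" using that by simp
    also have "\<dots> = zr c a" using that a by simp
    finally show ?thesis .
  qed
  show "zero_obj C a" unfolding zero_obj_def initial_def terminal_def
  proof (intro conjI ballI)
    fix b assume "ob b"
    show "\<exists>!f. f \<in> hom C a b"
    proof (rule ex1I[of _ "zr a b"])
      show "zr a b \<in> hom C a b" using a \<open>ob b\<close> by simp
      fix f assume "f \<in> hom C a b" then show "f = zr a b" using i by simp
    qed
    show "\<exists>!f. f \<in> hom C b a"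
    proof (rule ex1I[of _ "zr b a"])
      show "zr b a \<in> hom C b a" using a \<open>ob b\<close> by simp
      fix f assume "f \<in> hom C b a" then show "f = zr b a" using t by simp
    qed
  qed (use a in auto)
qed


lemma monicD: "monic C m \<Longrightarrow> arr x \<Longrightarrow> arr y \<Longrightarrow> trg x = src m \<Longrightarrow> trg y = src m \<Longrightarrow>
   src x = src y \<Longrightarrow> m \<cdot> x = m \<cdot> y \<Longrightarrow> x = y"
  unfolding monic_def by blast

lemma za_iff: "arr f \<Longrightarrow> src f = a \<Longrightarrow> trg f = b \<Longrightarrow> zero_arrow C f \<longleftrightarrow> f = zr a b"
  using zero_arrow_iff[of f] by simp

lemma ex1_uniq: "\<exists>!x. P x \<Longrightarrow> P a \<Longrightarrow> P b \<Longrightarrow> a = b"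
  by blast

lemma ker_basic: "is_kernel C k f \<Longrightarrow> arr f \<and> arr k \<and> trg k = src f \<and> zero_arrow C (f \<cdot> k)"
  unfolding is_kernel_def by (elim conjE) (intro conjI)

lemma ker_univ: "is_kernel C k f \<Longrightarrow> arr x \<Longrightarrow> trg x = src f \<Longrightarrow> zero_arrow C (f \<cdot> x) \<Longrightarrow>
    \<exists>!u. u \<in> hom C (src x) (src k) \<and> k \<cdot> u = x"
proof -
  assume a: "is_kernel C k f" "arr x" "trg x = src f" "zero_arrow C (f \<cdot> x)"
  have "\<forall>x\<in>Arr C. Cod C x = Dom C f \<and> zero_arrow C (Comp C f x) \<longrightarrow>
        (\<exists>!u. u \<in> hom C (Dom C x) (Dom C k) \<and> Comp C k u = x)"
    using a(1) unfolding is_kernel_def by (elim conjE)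
  then show ?thesis using a(2-4) by simp
qed

lemma kerD: "is_kernel C k f \<Longrightarrow> arr k \<and> arr f \<and> trg k = src f \<and> f \<cdot> k = zr (src k) (trg f)"
proof -
  assume a: "is_kernel C k f"
  then have b: "arr k" "arr f" "trg k = src f" "zero_arrow C (f \<cdot> k)" using ker_basic by simp_all
  then show ?thesis using za_iff[of "f \<cdot> k" "src k" "trg f"] by simp
qed

lemma ker_factor: "is_kernel C k f \<Longrightarrow> arr x \<Longrightarrow> trg x = src f \<Longrightarrow> f \<cdot> x = zr (src x) (trg f) \<Longrightarrow>
   \<exists>u. arr u \<and> src u = src x \<and> trg u = src k \<and> k \<cdot> u = x"
proof -
  assume a: "is_kernel C k f" "arr x" "trg x = src f" "f \<cdot> x = zr (src x) (trg f)"
  note K = kerD[OF a(1)]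
  have "zero_arrow C (f \<cdot> x)" unfolding a(4) using K a(2) by (intro zr_zero_arrow) simp_all
  then have "\<exists>!u. u \<in> hom C (src x) (src k) \<and> k \<cdot> u = x" using ker_univ a by simp
  then show ?thesis unfolding hom_iff by blast
qed

lemma ker_monic: "is_kernel C k f \<Longrightarrow> monic C k"
proof -
  assume a: "is_kernel C k f"
  have fk: "f \<cdot> k = zr (src k) (trg f)" and ka: "arr k" "arr f" "trg k = src f" using kerD[OF a] by simp_all
  show ?thesis unfolding monic_def
  proof (intro conjI ballI impI)
    show "arr k" using ka by simp
    fix g h assume g: "arr g" "arr h" "trg g = src k \<and> trg h = src k \<and> src g = src h \<and> k \<cdot> g = k \<cdot> h"
    have tg: "trg g = src k" "trg h = src k" "src h = src g" and kg: "k \<cdot> h = k \<cdot> g" using g by simp_all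
    have "f \<cdot> (k \<cdot> g) = (f \<cdot> k) \<cdot> g" using ka g(1) tg by simp
    also have "\<dots> = zr (src k) (trg f) \<cdot> g" by (simp only: fk)
    also have "\<dots> = zr (src g) (trg f)" using ka g(1) tg by simp
    finally have e: "f \<cdot> (k \<cdot> g) = zr (src g) (trg f)" .
    have kga: "arr (k \<cdot> g)" "src (k \<cdot> g) = src g" "trg (k \<cdot> g) = src f" using ka g(1) tg by simp_all
    have "zero_arrow C (f \<cdot> (k \<cdot> g))" unfolding e using ka g(1) by (intro zr_zero_arrow) simp_all
    then have U: "\<exists>!u. u \<in> hom C (src (k \<cdot> g)) (src k) \<and> k \<cdot> u = k \<cdot> g"
      using ker_univ[OF a] kga by blast
    have "g \<in> hom C (src (k \<cdot> g)) (src k) \<and> k \<cdot> g = k \<cdot> g" using kga g(1) tg by simp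
    moreover have "h \<in> hom C (src (k \<cdot> g)) (src k) \<and> k \<cdot> h = k \<cdot> g" using kga g(2) tg kg by simp
    ultimately show "g = h" using ex1_uniq[OF U] by blast
  qed
qed

lemma ker_intro: "arr k \<Longrightarrow> arr f \<Longrightarrow> trg k = src f \<Longrightarrow> f \<cdot> k = zr (src k) (trg f) \<Longrightarrow> monic C k \<Longrightarrow>
  (\<And>x. arr x \<Longrightarrow> trg x = src f \<Longrightarrow> f \<cdot> x = zr (src x) (trg f) \<Longrightarrow>
     \<exists>u. arr u \<and> src u = src x \<and> trg u = src k \<and> k \<cdot> u = x) \<Longrightarrow> is_kernel C k f"
proof -
  assume a: "arr k" "arr f" "trg k = src f" "f \<cdot> k = zr (src k) (trg f)" "monic C k"
    and F: "\<And>x. arr x \<Longrightarrow> trg x = src f \<Longrightarrow> f \<cdot> x = zr (src x) (trg f) \<Longrightarrow>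
     \<exists>u. arr u \<and> src u = src x \<and> trg u = src k \<and> k \<cdot> u = x"
  show ?thesis unfolding is_kernel_def
  proof (intro conjI ballI impI)
    show "zero_arrow C (f \<cdot> k)" using za_iff[of "f \<cdot> k" "src k" "trg f"] a by simp
    fix x assume x: "arr x" "trg x = src f \<and> zero_arrow C (f \<cdot> x)"
    then have "f \<cdot> x = zr (src x) (trg f)" using za_iff[of "f \<cdot> x" "src x" "trg f"] a by simp
    then obtain u where u: "arr u" "src u = src x" "trg u = src k" "k \<cdot> u = x" using F x by blast
    show "\<exists>!u. u \<in> hom C (src x) (src k) \<and> k \<cdot> u = x"
    proof (rule ex1I[of _ u])
      show "u \<in> hom C (src x) (src k) \<and> k \<cdot> u = x" using u by simp
      fix v assume "v \<in> hom C (src x) (src k) \<and> k \<cdot> v = x"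
      then show "v = u" using monicD[OF a(5), of v u] u by auto
    qed
  qed (use a in auto)
qed

lemma pbD: "is_pullback C f g p q \<Longrightarrow> arr f \<and> arr g \<and> arr p \<and> arr q \<and> trg f = trg g \<and> trg p = src f \<and>
   trg q = src g \<and> src p = src q \<and> f \<cdot> p = g \<cdot> q"
  unfolding is_pullback_def by blast

lemma pb_factor: "is_pullback C f g p q \<Longrightarrow> arr x \<Longrightarrow> arr y \<Longrightarrow> src x = src y \<Longrightarrow> trg x = src f \<Longrightarrow>
   trg y = src g \<Longrightarrow> f \<cdot> x = g \<cdot> y \<Longrightarrow>
   \<exists>u. arr u \<and> src u = src x \<and> trg u = src p \<and> p \<cdot> u = x \<and> q \<cdot> u = y"
  unfolding is_pullback_def hom_iff by blast

lemma pb_uniq: "is_pullback C f g p q \<Longrightarrow> arr u \<Longrightarrow> arr v \<Longrightarrow> src u = src v \<Longrightarrow> trg u = src p \<Longrightarrow>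
   trg v = src p \<Longrightarrow> p \<cdot> u = p \<cdot> v \<Longrightarrow> q \<cdot> u = q \<cdot> v \<Longrightarrow> u = v"
proof -
  assume a: "is_pullback C f g p q" "arr u" "arr v" "src u = src v" "trg u = src p"
   "trg v = src p" "p \<cdot> u = p \<cdot> v" "q \<cdot> u = q \<cdot> v"
  note P = pbD[OF a(1)]
  have "f \<cdot> (p \<cdot> u) = g \<cdot> (q \<cdot> u)" using P a by (metis assoc)
  moreover have "arr (p \<cdot> u)" "arr (q \<cdot> u)" "src (p \<cdot> u) = src (q \<cdot> u)" "trg (p \<cdot> u) = src f"
     "trg (q \<cdot> u) = src g" using P a by auto
  ultimately have "\<exists>!w. w \<in> hom C (src (p \<cdot> u)) (src p) \<and> p \<cdot> w = p \<cdot> u \<and> q \<cdot> w = q \<cdot> u"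
    using a(1) unfolding is_pullback_def by blast
  then show ?thesis using a P by auto
qed

lemma fin_complete: "finitely_complete C"
  using SA unfolding semi_abelian_def exact_def regular_def by blast

lemma pb_exists: "arr f \<Longrightarrow> arr g \<Longrightarrow> trg f = trg g \<Longrightarrow> \<exists>p q. is_pullback C f g p q"
  using fin_complete unfolding finitely_complete_def by blast

lemma coeqD: "is_coequalizer C f g e \<Longrightarrow> arr f \<and> arr g \<and> arr e \<and> src f = src g \<and> trg f = trg g \<and>
   src e = trg f \<and> e \<cdot> f = e \<cdot> g"
  unfolding is_coequalizer_def by blast

lemma coeq_factor: "is_coequalizer C f g e \<Longrightarrow> arr h \<Longrightarrow> src h = trg f \<Longrightarrow> h \<cdot> f = h \<cdot> g \<Longrightarrow>
   \<exists>u. arr u \<and> src u = trg e \<and> trg u = trg h \<and> u \<cdot> e = h"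
  unfolding is_coequalizer_def hom_iff by blast

lemma coeq_epi: "is_coequalizer C f g e \<Longrightarrow> arr u \<Longrightarrow> arr v \<Longrightarrow> src u = trg e \<Longrightarrow> src v = trg e \<Longrightarrow>
   trg u = trg v \<Longrightarrow> u \<cdot> e = v \<cdot> e \<Longrightarrow> u = v"
proof -
  assume a: "is_coequalizer C f g e" "arr u" "arr v" "src u = trg e" "src v = trg e"
   "trg u = trg v" "u \<cdot> e = v \<cdot> e"
  note E = coeqD[OF a(1)]
  have "(u \<cdot> e) \<cdot> f = (u \<cdot> e) \<cdot> g" using E a by (metis assoc)
  moreover have "arr (u \<cdot> e)" "src (u \<cdot> e) = trg f" using E a by auto
  ultimately have "\<exists>!w. w \<in> hom C (trg e) (trg (u \<cdot> e)) \<and> w \<cdot> e = u \<cdot> e"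
    using a(1) unfolding is_coequalizer_def by blast
  then show ?thesis using a E by auto
qed

lemma reg: "regular C" using SA unfolding semi_abelian_def exact_def by blast

lemma kp_coeq: "is_pullback C f f p q \<Longrightarrow> \<exists>e. is_coequalizer C p q e"
  using reg unfolding regular_def by blast

lemma reg_stable: "regular_epi C e \<Longrightarrow> is_pullback C e g p q \<Longrightarrow> regular_epi C q"
  using reg unfolding regular_def by blast

lemma exact_kp: "equiv_rel C r1 r2 \<Longrightarrow> \<exists>f. is_pullback C f f r1 r2"
  using SA unfolding semi_abelian_def exact_def by blast

lemma short_five: "split_ext C k p s \<Longrightarrow> split_ext C k' p' s' \<Longrightarrow>
   u \<in> hom C (src k) (src k') \<Longrightarrow> v \<in> hom C (src p) (src p') \<Longrightarrow> w \<in> hom C (trg p) (trg p') \<Longrightarrow>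
   v \<cdot> k = k' \<cdot> u \<Longrightarrow> p' \<cdot> v = w \<cdot> p \<Longrightarrow> v \<cdot> s = s' \<cdot> w \<Longrightarrow> iso C u \<Longrightarrow> iso C w \<Longrightarrow> iso C v"
proof -
  have P: "protomodular C" using SA unfolding semi_abelian_def by simp
  show "split_ext C k p s \<Longrightarrow> split_ext C k' p' s' \<Longrightarrow>
   u \<in> hom C (src k) (src k') \<Longrightarrow> v \<in> hom C (src p) (src p') \<Longrightarrow> w \<in> hom C (trg p) (trg p') \<Longrightarrow>
   v \<cdot> k = k' \<cdot> u \<Longrightarrow> p' \<cdot> v = w \<cdot> p \<Longrightarrow> v \<cdot> s = s' \<cdot> w \<Longrightarrow> iso C u \<Longrightarrow> iso C w \<Longrightarrow> iso C v"
    using P[unfolded protomodular_def, rule_format, of k p s k' p' s' u v w] by blast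
qed

lemma iso_id: "ob a \<Longrightarrow> iso C (idn a)"
  unfolding iso_def by (intro conjI bexI[of _ "idn a"]) auto

lemma iso_inv: "iso C v \<Longrightarrow> \<exists>w. arr w \<and> src w = trg v \<and> trg w = src v \<and> w \<cdot> v = idn (src v) \<and> v \<cdot> w = idn (trg v)"
  unfolding iso_def by auto

lemma monic_z0: "ob a \<Longrightarrow> monic C (zr z0 a)"
  unfolding monic_def using to_z0_eq by auto

lemma KZ: "arr g \<Longrightarrow> (\<And>x. arr x \<Longrightarrow> trg x = src g \<Longrightarrow> g \<cdot> x = zr (src x) (trg g) \<Longrightarrow> x = zr (src x) (src g))
   \<Longrightarrow> is_kernel C (zr z0 (src g)) g"
proof -
  assume g: "arr g" and T: "\<And>x. arr x \<Longrightarrow> trg x = src g \<Longrightarrow> g \<cdot> x = zr (src x) (trg g) \<Longrightarrow> x = zr (src x) (src g)"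
  show ?thesis
  proof (rule ker_intro)
    fix x assume x: "arr x" "trg x = src g" "g \<cdot> x = zr (src x) (trg g)"
    then have "x = zr (src x) (src g)" using T by blast
    then show "\<exists>u. arr u \<and> src u = src x \<and> trg u = src (zr z0 (src g)) \<and> zr z0 (src g) \<cdot> u = x"
      using x g by (intro exI[of _ "tz (src x)"]) simp
  qed (use g monic_z0 in auto)
qed

lemma ker_exists: "arr g \<Longrightarrow> \<exists>k. is_kernel C k g"
proof -
  assume g: "arr g"
  obtain p q where pq: "is_pullback C g (zr z0 (trg g)) p q" using pb_exists[of g "zr z0 (trg g)"] g by auto
  note P = pbD[OF pq]
  have "is_kernel C p g"
  proof (rule ker_intro)
    show "g \<cdot> p = zr (src p) (trg g)" using P g by simp
    show "monic C p" unfolding monic_def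
    proof (intro conjI ballI impI)
      fix u v assume uv: "arr u" "arr v" "trg u = src p \<and> trg v = src p \<and> src u = src v \<and> p \<cdot> u = p \<cdot> v"
      have "q \<cdot> u = q \<cdot> v" using P uv by (intro to_z0_eq) auto
      then show "u = v" using pb_uniq[OF pq] uv by auto
    qed (use P in auto)
    fix x assume x: "arr x" "trg x = src g" "g \<cdot> x = zr (src x) (trg g)"
    have "g \<cdot> x = zr z0 (trg g) \<cdot> tz (src x)" using x g by simp
    then obtain u where "arr u \<and> src u = src x \<and> trg u = src p \<and> p \<cdot> u = x \<and> q \<cdot> u = tz (src x)"
      using pb_factor[OF pq, of x "tz (src x)"] x g by auto
    then show "\<exists>u. arr u \<and> src u = src x \<and> trg u = src p \<and> p \<cdot> u = x" by blast
  qed (use P g in auto)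
  then show ?thesis by blast
qed

lemma trivker_monic: "arr f \<Longrightarrow> (\<And>x. arr x \<Longrightarrow> trg x = src f \<Longrightarrow> f \<cdot> x = zr (src x) (trg f) \<Longrightarrow> x = zr (src x) (src f))
   \<Longrightarrow> monic C f"
proof -
  assume f: "arr f" and T: "\<And>x. arr x \<Longrightarrow> trg x = src f \<Longrightarrow> f \<cdot> x = zr (src x) (trg f) \<Longrightarrow> x = zr (src x) (src f)"
  define A where "A = src f"
  have A[simp]: "ob A" "src f = A" using f A_def by auto
  obtain r1 r2 where pb: "is_pullback C f f r1 r2" using pb_exists[of f f] f by auto
  note P = pbD[OF pb]
  define R where "R = src r1"
  have R[simp]: "ob R" "src r1 = R" "src r2 = R" "trg r1 = A" "trg r2 = A" using P R_def by auto
  have fr: "f \<cdot> r1 = f \<cdot> r2" using P by simp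
  obtain d where d: "arr d" "src d = A" "trg d = R" "r1 \<cdot> d = idn A" "r2 \<cdot> d = idn A"
    using pb_factor[OF pb, of "idn A" "idn A"] f by auto
  have Pa[simp]: "arr r1" "arr r2" using P by simp_all
  have K1: "is_kernel C (zr z0 R) r1"
  proof -
    have "x = zr (src x) R" if x: "arr x" "trg x = R" "r1 \<cdot> x = zr (src x) A" for x
    proof -
      have "f \<cdot> (r2 \<cdot> x) = (f \<cdot> r2) \<cdot> x" using x f by simp
      also have "\<dots> = (f \<cdot> r1) \<cdot> x" by (simp only: fr)
      also have "\<dots> = f \<cdot> (r1 \<cdot> x)" using x f by simp
      also have "\<dots> = f \<cdot> zr (src x) A" by (simp only: x(3))
      also have "\<dots> = zr (src x) (trg f)" using x f by simp
      finally have "r2 \<cdot> x = zr (src x) A" using T[of "r2 \<cdot> x"] x by simp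
      then show ?thesis using pb_uniq[OF pb, of x "zr (src x) R"] x by simp
    qed
    then show ?thesis using KZ[of r1] by simp
  qed
  have K0: "is_kernel C (zr z0 A) (idn A)"
    using KZ[of "idn A"] by auto
  have S0: "split_ext C (zr z0 A) (idn A) (idn A)" unfolding split_ext_def using K0 by simp
  have S1: "split_ext C (zr z0 R) r1 d" unfolding split_ext_def using K1 d by simp
  have "iso C d"
    by (rule short_five[OF S0 S1, of "idn z0" d "idn A"]) (use d iso_id in simp_all)
  from iso_inv[OF this] obtain d' where d': "arr d'" "src d' = R" "trg d' = A" "d \<cdot> d' = idn R"
    using d by auto
  have "r1 = r1 \<cdot> idn R" by simp
  also have "\<dots> = r1 \<cdot> (d \<cdot> d')" by (simp only: d'(4))
  also have "\<dots> = (r1 \<cdot> d) \<cdot> d'" using d(1-3) d'(1-3) by simp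
  also have "\<dots> = idn A \<cdot> d'" by (simp only: d(4))
  also have "\<dots> = d'" using d'(1-3) by simp
  finally have e1: "r1 = d'" .
  have "r2 = r2 \<cdot> idn R" by simp
  also have "\<dots> = r2 \<cdot> (d \<cdot> d')" by (simp only: d'(4))
  also have "\<dots> = (r2 \<cdot> d) \<cdot> d'" using d(1-3) d'(1-3) by simp
  also have "\<dots> = idn A \<cdot> d'" by (simp only: d(5))
  also have "\<dots> = d'" using d'(1-3) by simp
  finally have "r1 = r2" using e1 by simp
  show ?thesis unfolding monic_def
  proof (intro conjI ballI impI)
    fix x y assume xy: "arr x" "arr y" "trg x = src f \<and> trg y = src f \<and> src x = src y \<and> f \<cdot> x = f \<cdot> y"
    then obtain u where "arr u \<and> src u = src x \<and> trg u = src r1 \<and> r1 \<cdot> u = x \<and> r2 \<cdot> u = y"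
      using pb_factor[OF pb, of x y] by auto
    then show "x = y" using \<open>r1 = r2\<close> by auto
  qed (use f in auto)
qed

lemma lift:
  assumes se: "split_ext C k p s" and G: "monic C G" and F: "arr F" "src F = src p" "trg F = trg G"
    and x1: "arr x1" "src x1 = src k" "trg x1 = src G" "F \<cdot> k = G \<cdot> x1"
    and x2: "arr x2" "src x2 = trg p" "trg x2 = src G" "F \<cdot> s = G \<cdot> x2"
  shows "\<exists>y. arr y \<and> src y = src F \<and> trg y = src G \<and> F = G \<cdot> y"
proof -
  have p: "arr p" "arr s" "src s = trg p" "trg s = src p" "p \<cdot> s = idn (trg p)" and K: "is_kernel C k p"
    using se unfolding split_ext_def by auto
  note KD = kerD[OF K]
  have Ga: "arr G" using G unfolding monic_def by simp
  obtain n g where pb: "is_pullback C F G n g" using pb_exists[of F G] F Ga by auto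
  note P = pbD[OF pb]
  define N where "N = src n"
  have N[simp]: "ob N" "src n = N" "src g = N" "trg n = src p" "trg g = src G" using P N_def F by auto
  have Fn: "F \<cdot> n = G \<cdot> g" using P by simp
  have na[simp]: "arr n" "arr g" using P by simp_all
  have nm: "monic C n" unfolding monic_def
  proof (intro conjI ballI impI)
    fix u v assume uv: "arr u" "arr v" "trg u = src n \<and> trg v = src n \<and> src u = src v \<and> n \<cdot> u = n \<cdot> v"
    have tu: "trg u = N" "trg v = N" "src v = src u" and nu: "n \<cdot> u = n \<cdot> v" using uv by simp_all
    have "G \<cdot> (g \<cdot> u) = (G \<cdot> g) \<cdot> u" using uv(1) tu Ga na by simp
    also have "\<dots> = (F \<cdot> n) \<cdot> u" by (simp only: Fn)
    also have "\<dots> = F \<cdot> (n \<cdot> u)" using uv(1) tu F na by simp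
    also have "\<dots> = F \<cdot> (n \<cdot> v)" by (simp only: nu)
    also have "\<dots> = (F \<cdot> n) \<cdot> v" using uv(2) tu F na by simp
    also have "\<dots> = (G \<cdot> g) \<cdot> v" by (simp only: Fn)
    also have "\<dots> = G \<cdot> (g \<cdot> v)" using uv(2) tu Ga na by simp
    finally have "g \<cdot> u = g \<cdot> v" using monicD[OF G, of "g \<cdot> u" "g \<cdot> v"] uv(1,2) tu na by simp
    then show "u = v" using pb_uniq[OF pb, of u v] uv by auto
  qed (use P in auto)
  have kk[simp]: "arr k" "trg k = src p" and pk: "p \<cdot> k = zr (src k) (trg p)" using KD by simp_all
  have pt[simp]: "arr p" "arr s" "src s = trg p" "trg s = src p" using p by simp_all
  have xt[simp]: "arr x1" "src x1 = src k" "trg x1 = src G" "arr x2" "src x2 = trg p" "trg x2 = src G"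
    using x1 x2 by simp_all
  have Ft[simp]: "arr F" "src F = src p" "trg F = trg G" using F by simp_all
  obtain k' where k': "arr k'" "src k' = src k" "trg k' = N" "n \<cdot> k' = k" "g \<cdot> k' = x1"
    using pb_factor[OF pb, of k x1] x1(4) by auto
  obtain s' where s': "arr s'" "src s' = trg p" "trg s' = N" "n \<cdot> s' = s" "g \<cdot> s' = x2"
    using pb_factor[OF pb, of s x2] x2(4) by auto
  have kt[simp]: "arr k'" "src k' = src k" "trg k' = N" "arr s'" "src s' = trg p" "trg s' = N"
    using k' s' by simp_all
  have pn: "arr (p \<cdot> n)" "src (p \<cdot> n) = N" "trg (p \<cdot> n) = trg p" by simp_all
  have K': "is_kernel C k' (p \<cdot> n)"
  proof (rule ker_intro)
    have "(p \<cdot> n) \<cdot> k' = p \<cdot> (n \<cdot> k')" by simp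
    also have "\<dots> = p \<cdot> k" by (simp only: k'(4))
    finally show "(p \<cdot> n) \<cdot> k' = zr (src k') (trg (p \<cdot> n))" using pk by simp
    show "monic C k'" unfolding monic_def
    proof (intro conjI ballI impI)
      fix u v assume uv: "arr u" "arr v" "trg u = src k' \<and> trg v = src k' \<and> src u = src v \<and> k' \<cdot> u = k' \<cdot> v"
      have tu[simp]: "trg u = src k" "trg v = src k" "src v = src u" and ku: "k' \<cdot> u = k' \<cdot> v" using uv by simp_all
      have "k \<cdot> u = (n \<cdot> k') \<cdot> u" by (simp only: k'(4))
      also have "\<dots> = n \<cdot> (k' \<cdot> u)" using uv(1) by simp
      also have "\<dots> = n \<cdot> (k' \<cdot> v)" by (simp only: ku)
      also have "\<dots> = (n \<cdot> k') \<cdot> v" using uv(2) by simp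
      also have "\<dots> = k \<cdot> v" by (simp only: k'(4))
      finally show "u = v" using monicD[OF ker_monic[OF K], of u v] uv(1,2) by simp
    qed simp
    fix x assume x: "arr x" "trg x = src (p \<cdot> n)" "(p \<cdot> n) \<cdot> x = zr (src x) (trg (p \<cdot> n))"
    have xt[simp]: "trg x = N" using x(2) by simp
    have "p \<cdot> (n \<cdot> x) = (p \<cdot> n) \<cdot> x" using x(1) by simp
    also have "\<dots> = zr (src x) (trg p)" using x(3) by simp
    finally have "p \<cdot> (n \<cdot> x) = zr (src (n \<cdot> x)) (trg p)" using x(1) by simp
    then obtain u where u: "arr u" "src u = src x" "trg u = src k" "k \<cdot> u = n \<cdot> x"
      using ker_factor[OF K, of "n \<cdot> x"] x(1) by auto
    have "n \<cdot> (k' \<cdot> u) = (n \<cdot> k') \<cdot> u" using u(1-3) by simp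
    also have "\<dots> = k \<cdot> u" by (simp only: k'(4))
    also have "\<dots> = n \<cdot> x" by (rule u(4))
    finally have "k' \<cdot> u = x" using monicD[OF nm, of "k' \<cdot> u" x] u(1-3) x(1) by simp
    then show "\<exists>u. arr u \<and> src u = src x \<and> trg u = src k' \<and> k' \<cdot> u = x" using u(1-3) by auto
  qed simp_all
  have S': "split_ext C k' (p \<cdot> n) s'" unfolding split_ext_def
  proof (intro conjI)
    have "(p \<cdot> n) \<cdot> s' = p \<cdot> (n \<cdot> s')" by simp
    also have "\<dots> = p \<cdot> s" by (simp only: s'(4))
    finally show "(p \<cdot> n) \<cdot> s' = idn (trg (p \<cdot> n))" using p(5) by simp
  qed (use K' in simp_all)
  have "iso C n"
    by (rule short_five[OF S' se, of "idn (src k)" n "idn (trg p)"]) (use k' s' iso_id in simp_all)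
  from iso_inv[OF this] obtain n' where n': "arr n'" "src n' = src p" "trg n' = N" "n \<cdot> n' = idn (src p)"
    by auto
  have "F = F \<cdot> idn (src p)" by simp
  also have "\<dots> = F \<cdot> (n \<cdot> n')" by (simp only: n'(4))
  also have "\<dots> = (F \<cdot> n) \<cdot> n'" using n'(1-3) by simp
  also have "\<dots> = (G \<cdot> g) \<cdot> n'" by (simp only: Fn)
  also have "\<dots> = G \<cdot> (g \<cdot> n')" using n'(1-3) Ga by simp
  finally have Fe: "F = G \<cdot> (g \<cdot> n')" .
  have "arr (g \<cdot> n')" "src (g \<cdot> n') = src F" "trg (g \<cdot> n') = src G" using n'(1-3) by simp_all
  with Fe show ?thesis by blast
qed

lemma prod_exists: "ob X \<Longrightarrow> ob Y \<Longrightarrow> \<exists>p q. is_pullback C (zr X z0) (zr Y z0) p q"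
  using pb_exists[of "zr X z0" "zr Y z0"] by simp

lemma prod_pair: "is_pullback C (zr X z0) (zr Y z0) p q \<Longrightarrow> ob X \<Longrightarrow> ob Y \<Longrightarrow> arr x \<Longrightarrow> arr y \<Longrightarrow>
   src x = src y \<Longrightarrow> trg x = X \<Longrightarrow> trg y = Y \<Longrightarrow>
   \<exists>u. arr u \<and> src u = src x \<and> trg u = src p \<and> p \<cdot> u = x \<and> q \<cdot> u = y"
proof -
  assume a: "is_pullback C (zr X z0) (zr Y z0) p q" "ob X" "ob Y" "arr x" "arr y" "src x = src y" "trg x = X" "trg y = Y"
  have "zr X z0 \<cdot> x = zr Y z0 \<cdot> y" using a by simp
  then show ?thesis using pb_factor[OF a(1), of x y] a by simp
qed



lemma ext_eq: "a \<cdot> b = c \<Longrightarrow> arr a \<Longrightarrow> arr b \<Longrightarrow> src a = trg b \<Longrightarrow> arr x \<Longrightarrow> trg x = src b \<Longrightarrow>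
   a \<cdot> (b \<cdot> x) = c \<cdot> x"
  by (metis assoc)

lemma perm:
  assumes h: "arr h1" "arr h2" "src h1 = A" "src h2 = A"
  and jm: "\<And>x y. arr x \<Longrightarrow> arr y \<Longrightarrow> trg x = A \<Longrightarrow> trg y = A \<Longrightarrow> src x = src y \<Longrightarrow>
             h1 \<cdot> x = h1 \<cdot> y \<Longrightarrow> h2 \<cdot> x = h2 \<cdot> y \<Longrightarrow> x = y"
  and abc: "arr a" "arr b" "arr c" "trg a = A" "trg b = A" "trg c = A" "src b = src a" "src c = src a"
     "h1 \<cdot> a = h1 \<cdot> b" "h2 \<cdot> b = h2 \<cdot> c"
  shows "\<exists>b'. arr b' \<and> src b' = src a \<and> trg b' = A \<and> h2 \<cdot> a = h2 \<cdot> b' \<and> h1 \<cdot> b' = h1 \<cdot> c"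
proof -
  have [simp]: "arr h1" "arr h2" "src h1 = A" "src h2 = A" "ob A" using h by auto
  define C1 where "C1 = trg h1"
  define C2 where "C2 = trg h2"
  have [simp]: "trg h1 = C1" "trg h2 = C2" "ob C1" "ob C2" using C1_def C2_def by auto
  obtain i1 i2 where pb1: "is_pullback C h1 h1 i1 i2" using pb_exists[of h1 h1] by auto
  obtain k1 k2 where pb2: "is_pullback C h2 h2 k1 k2" using pb_exists[of h2 h2] by auto
  define R1 where "R1 = src i1"
  define R2 where "R2 = src k1"
  note P1 = pbD[OF pb1] and P2 = pbD[OF pb2]
  have [simp]: "arr i1" "arr i2" "arr k1" "arr k2" "src i1 = R1" "src i2 = R1" "src k1 = R2" "src k2 = R2"
    "trg i1 = A" "trg i2 = A" "trg k1 = A" "trg k2 = A" "ob R1" "ob R2"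
    using P1 P2 R1_def R2_def by auto
  have e1: "h1 \<cdot> i2 = h1 \<cdot> i1" and e2: "h2 \<cdot> k2 = h2 \<cdot> k1" using P1 P2 by auto
  have e1x[simp]: "\<And>x. arr x \<Longrightarrow> trg x = R1 \<Longrightarrow> h1 \<cdot> (i2 \<cdot> x) = h1 \<cdot> (i1 \<cdot> x)"
    using ext_eq[OF e1] by simp
  have e2x[simp]: "\<And>x. arr x \<Longrightarrow> trg x = R2 \<Longrightarrow> h2 \<cdot> (k2 \<cdot> x) = h2 \<cdot> (k1 \<cdot> x)"
    using ext_eq[OF e2] by simp
  obtain d2 where d2[simp]: "arr d2" "src d2 = A" "trg d2 = R2" and d2e: "k1 \<cdot> d2 = idn A" "k2 \<cdot> d2 = idn A"
    using pb_factor[OF pb2, of "idn A" "idn A"] by auto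
  have d2x[simp]: "\<And>x. arr x \<Longrightarrow> trg x = A \<Longrightarrow> k1 \<cdot> (d2 \<cdot> x) = x"
     "\<And>x. arr x \<Longrightarrow> trg x = A \<Longrightarrow> k2 \<cdot> (d2 \<cdot> x) = x"
    using ext_eq[OF d2e(1)] ext_eq[OF d2e(2)] by simp_all
  obtain pI pK where pb3: "is_pullback C i2 k1 pI pK" using pb_exists[of i2 k1] by auto
  define P where "P = src pI"
  note P3 = pbD[OF pb3]
  have [simp]: "arr pI" "arr pK" "src pI = P" "src pK = P" "trg pI = R1" "trg pK = R2" "ob P"
    using P3 P_def by auto
  have e3: "k1 \<cdot> pK = i2 \<cdot> pI" using P3 by simp
  have e3x[simp]: "\<And>x. arr x \<Longrightarrow> trg x = P \<Longrightarrow> k1 \<cdot> (pK \<cdot> x) = i2 \<cdot> (pI \<cdot> x)"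
    using ext_eq[OF e3] by simp
  have "i2 \<cdot> idn R1 = k1 \<cdot> (d2 \<cdot> i2)" by simp
  then obtain sg where sg[simp]: "arr sg" "src sg = R1" "trg sg = P" and sge: "pI \<cdot> sg = idn R1" "pK \<cdot> sg = d2 \<cdot> i2"
    using pb_factor[OF pb3, of "idn R1" "d2 \<cdot> i2"] by auto
  have sgx[simp]: "\<And>x. arr x \<Longrightarrow> trg x = R1 \<Longrightarrow> pK \<cdot> (sg \<cdot> x) = d2 \<cdot> (i2 \<cdot> x)"
    using ext_eq[OF sge(2)] by simp
  obtain ka where K: "is_kernel C ka pI" using ker_exists[of pI] by auto
  note KD = kerD[OF K]
  define N where "N = src ka"
  have [simp]: "arr ka" "src ka = N" "trg ka = P" "ob N" using KD N_def by auto
  have kae: "pI \<cdot> ka = zr N R1" using KD by simp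
  have se: "split_ext C ka pI sg" unfolding split_ext_def using K sge by simp
  obtain q1 q2 where pb4: "is_pullback C (zr C2 z0) (zr C1 z0) q1 q2" using prod_exists[of C2 C1] by auto
  define E where "E = src q1"
  note P4 = pbD[OF pb4]
  have [simp]: "arr q1" "arr q2" "src q1 = E" "src q2 = E" "trg q1 = C2" "trg q2 = C1" "ob E"
    using P4 E_def by auto
  obtain G where G[simp]: "arr G" "src G = A" "trg G = E" and Ge: "q1 \<cdot> G = h2" "q2 \<cdot> G = h1"
    using prod_pair[OF pb4, of h2 h1] by auto
  have Gx[simp]: "\<And>x. arr x \<Longrightarrow> trg x = A \<Longrightarrow> q1 \<cdot> (G \<cdot> x) = h2 \<cdot> x"
     "\<And>x. arr x \<Longrightarrow> trg x = A \<Longrightarrow> q2 \<cdot> (G \<cdot> x) = h1 \<cdot> x"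
    using ext_eq[OF Ge(1)] ext_eq[OF Ge(2)] by simp_all
  have Gm: "monic C G" unfolding monic_def
  proof (intro conjI ballI impI)
    fix x y assume xy: "arr x" "arr y" "trg x = src G \<and> trg y = src G \<and> src x = src y \<and> G \<cdot> x = G \<cdot> y"
    have t[simp]: "trg x = A" "trg y = A" and s: "src x = src y" and g: "G \<cdot> x = G \<cdot> y" using xy by simp_all
    have "q1 \<cdot> (G \<cdot> x) = q1 \<cdot> (G \<cdot> y)" "q2 \<cdot> (G \<cdot> x) = q2 \<cdot> (G \<cdot> y)" by (simp_all only: g)
    then have "h2 \<cdot> x = h2 \<cdot> y" "h1 \<cdot> x = h1 \<cdot> y" using xy(1,2) by simp_all
    then show "x = y" using jm[of x y] xy(1,2) s by simp
  qed simp
  obtain F where F[simp]: "arr F" "src F = P" "trg F = E" and Fe: "q1 \<cdot> F = h2 \<cdot> i1 \<cdot> pI" "q2 \<cdot> F = h1 \<cdot> k2 \<cdot> pK"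
    using prod_pair[OF pb4, of "h2 \<cdot> i1 \<cdot> pI" "h1 \<cdot> k2 \<cdot> pK"] by auto
  have Fx[simp]: "\<And>x. arr x \<Longrightarrow> trg x = P \<Longrightarrow> q1 \<cdot> (F \<cdot> x) = h2 \<cdot> i1 \<cdot> pI \<cdot> x"
     "\<And>x. arr x \<Longrightarrow> trg x = P \<Longrightarrow> q2 \<cdot> (F \<cdot> x) = h1 \<cdot> k2 \<cdot> pK \<cdot> x"
    using ext_eq[OF Fe(1)] ext_eq[OF Fe(2)] by simp_all
  have x1: "F \<cdot> ka = G \<cdot> (k2 \<cdot> pK \<cdot> ka)"
  proof (rule pb_uniq[OF pb4])
    show "q1 \<cdot> F \<cdot> ka = q1 \<cdot> G \<cdot> k2 \<cdot> pK \<cdot> ka" using kae by simp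
    show "q2 \<cdot> F \<cdot> ka = q2 \<cdot> G \<cdot> k2 \<cdot> pK \<cdot> ka" by simp
  qed simp_all
  have x2: "F \<cdot> sg = G \<cdot> i1"
  proof (rule pb_uniq[OF pb4])
    show "q1 \<cdot> F \<cdot> sg = q1 \<cdot> G \<cdot> i1" using sge by simp
    show "q2 \<cdot> F \<cdot> sg = q2 \<cdot> G \<cdot> i1" using sge e1 by simp
  qed simp_all
  obtain y where y[simp]: "arr y" "src y = P" "trg y = A" and ye: "F = G \<cdot> y"
    using lift[OF se Gm, of F "k2 \<cdot> pK \<cdot> ka" i1] x1 x2 by auto
  have [simp]: "arr a" "arr b" "arr c" "trg a = A" "trg b = A" "trg c = A" "src b = src a" "src c = src a"
    using abc by auto
  obtain u where u[simp]: "arr u" "src u = src a" "trg u = R1" and ue[simp]: "i1 \<cdot> u = a" "i2 \<cdot> u = b"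
    using pb_factor[OF pb1, of a b] abc by auto
  obtain v where v[simp]: "arr v" "src v = src a" "trg v = R2" and ve[simp]: "k1 \<cdot> v = b" "k2 \<cdot> v = c"
    using pb_factor[OF pb2, of b c] abc by auto
  have "i2 \<cdot> u = k1 \<cdot> v" by simp
  then obtain w where w[simp]: "arr w" "src w = src a" "trg w = P" and we[simp]: "pI \<cdot> w = u" "pK \<cdot> w = v"
    using pb_factor[OF pb3, of u v] by auto
  have "q1 \<cdot> (F \<cdot> w) = q1 \<cdot> ((G \<cdot> y) \<cdot> w)" "q2 \<cdot> (F \<cdot> w) = q2 \<cdot> ((G \<cdot> y) \<cdot> w)"
    by (simp_all only: ye[symmetric])
  then have r: "h2 \<cdot> a = h2 \<cdot> (y \<cdot> w)" "h1 \<cdot> c = h1 \<cdot> (y \<cdot> w)" by simp_all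
  have "arr (y \<cdot> w)" "src (y \<cdot> w) = src a" "trg (y \<cdot> w) = A" by simp_all
  then show ?thesis using r by (intro exI[of _ "y \<cdot> w"]) (simp only: simp_thms)
qed


lemma rel_memI: "arr u \<Longrightarrow> trg u = src r1 \<Longrightarrow> r1 \<cdot> u = x \<Longrightarrow> r2 \<cdot> u = y \<Longrightarrow> rel_mem C r1 r2 x y"
  unfolding rel_mem_def by blast

lemma rel_memE: "rel_mem C r1 r2 x y \<Longrightarrow> (\<And>u. arr u \<Longrightarrow> trg u = src r1 \<Longrightarrow> r1 \<cdot> u = x \<Longrightarrow> r2 \<cdot> u = y \<Longrightarrow> P) \<Longrightarrow> P"
  unfolding rel_mem_def by blast

lemma normal_image:
  assumes h: "arr hI" "arr hK" "src hI = A" "src hK = A"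
  and jm: "\<And>x y. arr x \<Longrightarrow> arr y \<Longrightarrow> trg x = A \<Longrightarrow> trg y = A \<Longrightarrow> src x = src y \<Longrightarrow>
             hI \<cdot> x = hI \<cdot> y \<Longrightarrow> hK \<cdot> x = hK \<cdot> y \<Longrightarrow> x = y"
  and Km: "is_kernel C m hI"
  and pb2: "is_pullback C hK hK k1 k2" and eK: "is_coequalizer C k1 k2 eK"
  shows "normal_mono C (eK \<cdot> m)"
proof -
  have [simp]: "arr hI" "arr hK" "src hI = A" "src hK = A" "ob A" using h by auto
  define CI where "CI = trg hI"
  define CK where "CK = trg hK"
  have [simp]: "trg hI = CI" "trg hK = CK" "ob CI" "ob CK" using CI_def CK_def by auto
  note KmD = kerD[OF Km]
  define I where "I = src m"
  have [simp]: "arr m" "src m = I" "trg m = A" "ob I" using KmD I_def by auto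
  have hm[simp]: "hI \<cdot> m = zr I CI" using KmD by simp
  have hmx[simp]: "\<And>x. arr x \<Longrightarrow> trg x = I \<Longrightarrow> hI \<cdot> (m \<cdot> x) = zr (src x) CI"
    using ext_eq[OF hm] by simp
  obtain i1 i2 where pb1: "is_pullback C hI hI i1 i2" using pb_exists[of hI hI] by auto
  define R1 where "R1 = src i1"
  define R2 where "R2 = src k1"
  note P1 = pbD[OF pb1] and P2 = pbD[OF pb2]
  have [simp]: "arr i1" "arr i2" "arr k1" "arr k2" "src i1 = R1" "src i2 = R1" "src k1 = R2" "src k2 = R2"
    "trg i1 = A" "trg i2 = A" "trg k1 = A" "trg k2 = A" "ob R1" "ob R2"
    using P1 P2 R1_def R2_def by auto
  have e1[simp]: "hI \<cdot> i2 = hI \<cdot> i1" and e2[simp]: "hK \<cdot> k2 = hK \<cdot> k1" using P1 P2 by auto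
  have e1x[simp]: "\<And>x. arr x \<Longrightarrow> trg x = R1 \<Longrightarrow> hI \<cdot> (i2 \<cdot> x) = hI \<cdot> (i1 \<cdot> x)"
    using ext_eq[OF e1] by simp
  have e2x[simp]: "\<And>x. arr x \<Longrightarrow> trg x = R2 \<Longrightarrow> hK \<cdot> (k2 \<cdot> x) = hK \<cdot> (k1 \<cdot> x)"
    using ext_eq[OF e2] by simp
  obtain pI pK where pb3: "is_pullback C i2 k1 pI pK" using pb_exists[of i2 k1] by auto
  define Pt where "Pt = src pI"
  note P3 = pbD[OF pb3]
  have [simp]: "arr pI" "arr pK" "src pI = Pt" "src pK = Pt" "trg pI = R1" "trg pK = R2" "ob Pt"
    using P3 Pt_def by auto
  have e3[simp]: "k1 \<cdot> pK = i2 \<cdot> pI" using P3 by simp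
  have e3x[simp]: "\<And>x. arr x \<Longrightarrow> trg x = Pt \<Longrightarrow> k1 \<cdot> (pK \<cdot> x) = i2 \<cdot> (pI \<cdot> x)"
    using ext_eq[OF e3] by simp
  define t1 where "t1 = i1 \<cdot> pI"
  define t2 where "t2 = k2 \<cdot> pK"
  have [simp]: "arr t1" "arr t2" "src t1 = Pt" "src t2 = Pt" "trg t1 = A" "trg t2 = A"
    unfolding t1_def t2_def by simp_all
  have memI: "rel_mem C t1 t2 x y" if "arr x" "arr y" "arr b" "trg x = A" "trg y = A" "trg b = A"
    "src y = src x" "src b = src x" "hI \<cdot> x = hI \<cdot> b" "hK \<cdot> b = hK \<cdot> y" for x y b
  proof -
    have "\<exists>u. arr u \<and> src u = src x \<and> trg u = src i1 \<and> i1 \<cdot> u = x \<and> i2 \<cdot> u = b"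
      by (rule pb_factor[OF pb1]) (use that in simp_all)
    then obtain u1 where u1: "arr u1" "src u1 = src x" "trg u1 = src i1" "i1 \<cdot> u1 = x" "i2 \<cdot> u1 = b"
      by blast
    have "\<exists>u. arr u \<and> src u = src b \<and> trg u = src k1 \<and> k1 \<cdot> u = b \<and> k2 \<cdot> u = y"
      by (rule pb_factor[OF pb2]) (use that in simp_all)
    then obtain u2 where u2: "arr u2" "src u2 = src b" "trg u2 = src k1" "k1 \<cdot> u2 = b" "k2 \<cdot> u2 = y"
      by blast
    have "\<exists>u. arr u \<and> src u = src u1 \<and> trg u = src pI \<and> pI \<cdot> u = u1 \<and> pK \<cdot> u = u2"
      by (rule pb_factor[OF pb3]) (use u1 u2 that in simp_all)
    then obtain w where w: "arr w" "src w = src u1" "trg w = src pI" "pI \<cdot> w = u1" "pK \<cdot> w = u2"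
      by blast
    show ?thesis
    proof (rule rel_memI[of w])
      show "t1 \<cdot> w = x" unfolding t1_def using w u1 by simp
      show "t2 \<cdot> w = y" unfolding t2_def using w u2 by simp
    qed (use w u1 in simp_all)
  qed
  have memD: "arr x \<and> arr y \<and> trg x = A \<and> trg y = A \<and> src y = src x \<and>
     (\<exists>b. arr b \<and> src b = src x \<and> trg b = A \<and> hI \<cdot> x = hI \<cdot> b \<and> hK \<cdot> b = hK \<cdot> y)"
    if R: "rel_mem C t1 t2 x y" for x y
  proof -
    obtain u where u: "arr u" "trg u = Pt" and ux: "t1 \<cdot> u = x" and uy: "t2 \<cdot> u = y"
      using R by (rule rel_memE) simp
    have x: "x = i1 \<cdot> pI \<cdot> u" using ux u unfolding t1_def by simp
    have y: "y = k2 \<cdot> pK \<cdot> u" using uy u unfolding t2_def by simp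
    have "arr (i2 \<cdot> pI \<cdot> u) \<and> src (i2 \<cdot> pI \<cdot> u) = src x \<and> trg (i2 \<cdot> pI \<cdot> u) = A \<and>
      hI \<cdot> x = hI \<cdot> (i2 \<cdot> pI \<cdot> u) \<and> hK \<cdot> (i2 \<cdot> pI \<cdot> u) = hK \<cdot> y"
      unfolding x y using u by simp
    moreover have "arr x \<and> arr y \<and> trg x = A \<and> trg y = A \<and> src y = src x" unfolding x y using u by simp
    ultimately show ?thesis by blast
  qed
  have jm': "\<And>x y. arr x \<Longrightarrow> arr y \<Longrightarrow> trg x = A \<Longrightarrow> trg y = A \<Longrightarrow> src x = src y \<Longrightarrow>
             hK \<cdot> x = hK \<cdot> y \<Longrightarrow> hI \<cdot> x = hI \<cdot> y \<Longrightarrow> x = y" using jm by blast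
  have ER: "equiv_rel C t1 t2" unfolding equiv_rel_def
  proof (intro conjI allI impI ballI)
    fix u v assume uv: "arr u" "arr v" "trg u = src t1 \<and> trg v = src t1 \<and> src u = src v \<and> t1 \<cdot> u = t1 \<cdot> v \<and> t2 \<cdot> u = t2 \<cdot> v"
    have ut[simp]: "trg u = Pt" "trg v = Pt" "src v = src u" using uv(3) by simp_all
    have "t1 \<cdot> u = t1 \<cdot> v" "t2 \<cdot> u = t2 \<cdot> v" using uv(3) by blast+
    then have a1: "i1 \<cdot> pI \<cdot> u = i1 \<cdot> pI \<cdot> v" "k2 \<cdot> pK \<cdot> u = k2 \<cdot> pK \<cdot> v" using uv(1,2) unfolding t1_def t2_def by simp_all
    have "hI \<cdot> (i2 \<cdot> pI \<cdot> u) = hI \<cdot> (i2 \<cdot> pI \<cdot> v)" using a1 uv(1,2) by simp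
    moreover have "hK \<cdot> (i2 \<cdot> pI \<cdot> u) = hK \<cdot> (i2 \<cdot> pI \<cdot> v)"
    proof -
      have "hK \<cdot> (k2 \<cdot> pK \<cdot> u) = hK \<cdot> (k2 \<cdot> pK \<cdot> v)" using a1 by simp
      then show ?thesis using uv(1,2) by simp
    qed
    ultimately have a2: "i2 \<cdot> pI \<cdot> u = i2 \<cdot> pI \<cdot> v" using jm[of "i2 \<cdot> pI \<cdot> u" "i2 \<cdot> pI \<cdot> v"] uv(1,2) by simp
    have a3: "pI \<cdot> u = pI \<cdot> v" using pb_uniq[OF pb1, of "pI \<cdot> u" "pI \<cdot> v"] a1 a2 uv(1,2) by simp
    have "k1 \<cdot> pK \<cdot> u = k1 \<cdot> pK \<cdot> v" using a2 uv(1,2) by simp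
    then have a4: "pK \<cdot> u = pK \<cdot> v" using pb_uniq[OF pb2, of "pK \<cdot> u" "pK \<cdot> v"] a1 uv(1,2) by simp
    show "u = v" using pb_uniq[OF pb3, of u v] a3 a4 uv(1,2) by simp
  next
    fix x assume x: "arr x" "trg x = trg t1"
    show "rel_mem C t1 t2 x x" using memI[of x x x] x by simp
  next
    fix x y assume "rel_mem C t1 t2 x y"
    from memD[OF this] obtain b where xy: "arr x" "arr y" "trg x = A" "trg y = A" "src y = src x"
      and b: "arr b" "src b = src x" "trg b = A" "hI \<cdot> x = hI \<cdot> b" "hK \<cdot> b = hK \<cdot> y" by blast
    have "\<exists>b'. arr b' \<and> src b' = src x \<and> trg b' = A \<and> hK \<cdot> x = hK \<cdot> b' \<and> hI \<cdot> b' = hI \<cdot> y"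
      by (rule perm[of hI hK A x b y, OF _ _ _ _ jm]) (use xy b in simp_all)
    then obtain b' where b': "arr b'" "src b' = src x" "trg b' = A" "hK \<cdot> x = hK \<cdot> b'" "hI \<cdot> b' = hI \<cdot> y"
      by blast
    show "rel_mem C t1 t2 y x" by (rule memI[of y x b']) (use xy b' in simp_all)
  next
    fix x y z assume "rel_mem C t1 t2 x y \<and> rel_mem C t1 t2 y z"
    then have r: "rel_mem C t1 t2 x y" "rel_mem C t1 t2 y z" by simp_all
    from memD[OF r(1)] obtain b where xy: "arr x" "arr y" "trg x = A" "trg y = A" "src y = src x"
      and b: "arr b" "src b = src x" "trg b = A" "hI \<cdot> x = hI \<cdot> b" "hK \<cdot> b = hK \<cdot> y" by blast
    from memD[OF r(2)] obtain d where yz: "arr z" "trg z = A" "src z = src y"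
      and d: "arr d" "src d = src y" "trg d = A" "hI \<cdot> y = hI \<cdot> d" "hK \<cdot> d = hK \<cdot> z" by blast
    have "\<exists>b'. arr b' \<and> src b' = src b \<and> trg b' = A \<and> hI \<cdot> b = hI \<cdot> b' \<and> hK \<cdot> b' = hK \<cdot> d"
      by (rule perm[of hK hI A b y d, OF _ _ _ _ jm']) (use xy b d in simp_all)
    then obtain b' where b': "arr b'" "src b' = src b" "trg b' = A" "hI \<cdot> b = hI \<cdot> b'" "hK \<cdot> b' = hK \<cdot> d"
      by blast
    show "rel_mem C t1 t2 x z" by (rule memI[of x z b']) (use xy yz b b' d in simp_all)
  qed simp_all
  obtain psi where kp: "is_pullback C psi psi t1 t2" using exact_kp[OF ER] by blast
  obtain eT where eT: "is_coequalizer C t1 t2 eT" using kp_coeq[OF kp] by blast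
  have PS: "arr psi" "src psi = A" using pbD[OF kp] by simp_all
  have ET: "arr eT" "src eT = A" and ETe: "eT \<cdot> t1 = eT \<cdot> t2" using coeqD[OF eT] by simp_all
  have EK: "arr eK" "src eK = A" and EKe: "eK \<cdot> k1 = eK \<cdot> k2" using coeqD[OF eK] by simp_all
  define Q where "Q = trg eK"
  define D where "D = trg eT"
  have [simp]: "arr eK" "src eK = A" "trg eK = Q" "arr eT" "src eT = A" "trg eT = D" "ob Q" "ob D"
    "arr psi" "src psi = A" using ET EK PS Q_def D_def by auto
  have "hK \<cdot> k1 = hK \<cdot> k2" by simp
  then obtain wK where wK: "arr wK" "src wK = Q" "trg wK = CK" "wK \<cdot> eK = hK"
    using coeq_factor[OF eK, of hK] by auto
  have "psi \<cdot> t1 = psi \<cdot> t2" using pbD[OF kp] by blast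
  then obtain wT where wT: "arr wT" "src wT = D" "trg wT = trg psi" "wT \<cdot> eT = psi"
    using coeq_factor[OF eT, of psi] by auto
  have wKx: "\<And>x. arr x \<Longrightarrow> trg x = A \<Longrightarrow> wK \<cdot> (eK \<cdot> x) = hK \<cdot> x"
    using ext_eq[OF wK(4)] wK by simp
  have wTx: "\<And>x. arr x \<Longrightarrow> trg x = A \<Longrightarrow> wT \<cdot> (eT \<cdot> x) = psi \<cdot> x"
    using ext_eq[OF wT(4)] wT by simp
  have EKx: "\<And>x. arr x \<Longrightarrow> trg x = R2 \<Longrightarrow> eK \<cdot> (k1 \<cdot> x) = eK \<cdot> (k2 \<cdot> x)"
    using ext_eq[OF EKe] by simp
  have ETx: "\<And>x. arr x \<Longrightarrow> trg x = Pt \<Longrightarrow> eT \<cdot> (t1 \<cdot> x) = eT \<cdot> (t2 \<cdot> x)"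
    using ext_eq[OF ETe] by simp
  have eKD: "hK \<cdot> x = hK \<cdot> x'" if "arr x" "arr x'" "trg x = A" "trg x' = A" "eK \<cdot> x = eK \<cdot> x'" for x x'
  proof -
    have "hK \<cdot> x = wK \<cdot> (eK \<cdot> x)" using wKx that(1-4) by simp
    also have "\<dots> = wK \<cdot> (eK \<cdot> x')" using that(5) by simp
    also have "\<dots> = hK \<cdot> x'" using wKx that(1-4) by simp
    finally show ?thesis .
  qed
  have eKI: "eK \<cdot> x = eK \<cdot> x'" if "arr x" "arr x'" "trg x = A" "trg x' = A" "src x = src x'" "hK \<cdot> x = hK \<cdot> x'" for x x'
  proof -
    have "\<exists>u. arr u \<and> src u = src x \<and> trg u = src k1 \<and> k1 \<cdot> u = x \<and> k2 \<cdot> u = x'"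
      by (rule pb_factor[OF pb2]) (use that in simp_all)
    then obtain v where v: "arr v" "src v = src x" "trg v = src k1" "k1 \<cdot> v = x" "k2 \<cdot> v = x'" by blast
    have "eK \<cdot> x = eK \<cdot> (k1 \<cdot> v)" using v(4) by simp
    also have "\<dots> = eK \<cdot> (k2 \<cdot> v)" using EKx v(1,3) by simp
    also have "\<dots> = eK \<cdot> x'" using v(5) by simp
    finally show ?thesis .
  qed
  have eTI: "eT \<cdot> x = eT \<cdot> y" if R: "rel_mem C t1 t2 x y" for x y
  proof -
    obtain u where u: "arr u" "trg u = src t1" and ux: "t1 \<cdot> u = x" and uy: "t2 \<cdot> u = y"
      using R by (rule rel_memE)
    have "eT \<cdot> x = eT \<cdot> (t1 \<cdot> u)" using ux by simp
    also have "\<dots> = eT \<cdot> (t2 \<cdot> u)" using ETx u by simp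
    also have "\<dots> = eT \<cdot> y" using uy by simp
    finally show ?thesis .
  qed
  have eTD: "rel_mem C t1 t2 x y" if "arr x" "arr y" "trg x = A" "trg y = A" "src x = src y" "eT \<cdot> x = eT \<cdot> y" for x y
  proof -
    have "psi \<cdot> x = wT \<cdot> (eT \<cdot> x)" using wTx that(1-4) by simp
    also have "\<dots> = wT \<cdot> (eT \<cdot> y)" using that(6) by simp
    also have "\<dots> = psi \<cdot> y" using wTx that(1-4) by simp
    finally have "psi \<cdot> x = psi \<cdot> y" .
    then have "\<exists>u. arr u \<and> src u = src x \<and> trg u = src t1 \<and> t1 \<cdot> u = x \<and> t2 \<cdot> u = y"
      by (intro pb_factor[OF kp]) (use that(1-5) in simp_all)
    then obtain u where "arr u" "trg u = src t1" "t1 \<cdot> u = x" "t2 \<cdot> u = y" by blast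
    then show ?thesis by (rule rel_memI)
  qed
  have "eT \<cdot> k1 = eT \<cdot> k2"
    using eTI memI[of k1 k2 k1] by simp
  then obtain t where t: "arr t" "src t = Q" "trg t = D" "t \<cdot> eK = eT"
    using coeq_factor[OF eK, of eT] by auto
  have Mm: "monic C (eK \<cdot> m)" unfolding monic_def
  proof (intro conjI ballI impI)
    fix x x' assume xx: "arr x" "arr x'" "trg x = src (eK \<cdot> m) \<and> trg x' = src (eK \<cdot> m) \<and> src x = src x' \<and> (eK \<cdot> m) \<cdot> x = (eK \<cdot> m) \<cdot> x'"
    have xt[simp]: "trg x = I" "trg x' = I" "src x' = src x" using xx(3) by simp_all
    have e0: "(eK \<cdot> m) \<cdot> x = (eK \<cdot> m) \<cdot> x'" using xx(3) by blast
    have e: "eK \<cdot> (m \<cdot> x) = eK \<cdot> (m \<cdot> x')" using e0 xx(1,2) by simp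
    have "hK \<cdot> (m \<cdot> x) = hK \<cdot> (m \<cdot> x')" using eKD[OF _ _ _ _ e] xx(1,2) by simp
    moreover have "hI \<cdot> (m \<cdot> x) = hI \<cdot> (m \<cdot> x')" using xx(1,2) by simp
    ultimately have "m \<cdot> x = m \<cdot> x'" using jm[of "m \<cdot> x" "m \<cdot> x'"] xx(1,2) by simp
    then show "x = x'" using monicD[OF ker_monic[OF Km], of x x'] xx(1,2) by simp
  qed simp
  have tt[simp]: "arr t" "src t = Q" "trg t = D" using t by simp_all
  have tx: "\<And>x. arr x \<Longrightarrow> trg x = A \<Longrightarrow> t \<cdot> (eK \<cdot> x) = eT \<cdot> x"
    using ext_eq[OF t(4)] by simp
  have "is_kernel C (eK \<cdot> m) t"
  proof (rule ker_intro)
    have "rel_mem C t1 t2 (zr I A) m" by (rule memI[of _ _ m]) simp_all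
    from eTI[OF this] have em: "eT \<cdot> m = eT \<cdot> zr I A" by (rule sym)
    have "t \<cdot> (eK \<cdot> m) = eT \<cdot> m" using tx by simp
    also have "\<dots> = eT \<cdot> zr I A" by (rule em)
    also have "\<dots> = zr I D" by simp
    finally show "t \<cdot> eK \<cdot> m = zr (src (eK \<cdot> m)) (trg t)" by simp
    show "monic C (eK \<cdot> m)" by (rule Mm)
    fix y assume y: "arr y" "trg y = src t" "t \<cdot> y = zr (src y) (trg t)"
    have yt[simp]: "trg y = Q" using y by simp
    have ty: "t \<cdot> y = zr (src y) D" using y by simp
    obtain a c' where pbc: "is_pullback C eK y a c'" using pb_exists[of eK y] y by auto
    have PC: "arr a" "arr c'" "src c' = src a" "trg a = A" "trg c' = src y"
      using pbD[OF pbc] by simp_all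
    have ac: "eK \<cdot> a = y \<cdot> c'" using pbD[OF pbc] by blast
    define Y' where "Y' = src a"
    have [simp]: "arr a" "arr c'" "src a = Y'" "src c' = Y'" "trg a = A" "trg c' = src y" "ob Y'"
      using PC Y'_def by auto
    have "regular_epi C eK" unfolding regular_epi_def using eK by blast
    then have "regular_epi C c'" using reg_stable pbc by blast
    then obtain f1 f2 where cq: "is_coequalizer C f1 f2 c'" unfolding regular_epi_def by blast
    have ft[simp]: "arr f1" "arr f2" "trg f1 = Y'" "trg f2 = Y'" "src f2 = src f1" using coeqD[OF cq] by auto
    have cfe: "c' \<cdot> f1 = c' \<cdot> f2" using coeqD[OF cq] by blast
    have "eT \<cdot> a = t \<cdot> (eK \<cdot> a)" using tx by simp
    also have "\<dots> = t \<cdot> (y \<cdot> c')" by (simp only: ac)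
    also have "\<dots> = (t \<cdot> y) \<cdot> c'" using y(1) by simp
    also have "\<dots> = zr (src y) D \<cdot> c'" by (simp only: ty)
    also have "\<dots> = zr Y' D" using y(1) by simp
    also have "\<dots> = eT \<cdot> zr Y' A" by simp
    finally have "eT \<cdot> a = eT \<cdot> zr Y' A" .
    then have "rel_mem C t1 t2 a (zr Y' A)" using eTD[of a "zr Y' A"] by simp
    from memD[OF this] obtain b where b: "arr b" "src b = Y'" "trg b = A" "hI \<cdot> a = hI \<cdot> b" "hK \<cdot> b = hK \<cdot> zr Y' A"
      by auto
    have "\<exists>b'. arr b' \<and> src b' = src a \<and> trg b' = A \<and> hK \<cdot> a = hK \<cdot> b' \<and> hI \<cdot> b' = hI \<cdot> zr Y' A"
      by (rule perm[of hI hK A a b "zr Y' A", OF _ _ _ _ jm]) (use b in simp_all)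
    then obtain b' where b': "arr b'" "src b' = Y'" "trg b' = A" "hK \<cdot> a = hK \<cdot> b'" "hI \<cdot> b' = hI \<cdot> zr Y' A"
      by auto
    have "hI \<cdot> b' = zr (src b') CI" using b' by simp
    then have "\<exists>u. arr u \<and> src u = src b' \<and> trg u = src m \<and> m \<cdot> u = b'"
      using ker_factor[OF Km, of b'] b' by simp
    then obtain i where i: "arr i" "src i = Y'" "trg i = I" "m \<cdot> i = b'"
      using b' by auto
    have "y \<cdot> c' = eK \<cdot> a" using ac by simp
    also have "\<dots> = eK \<cdot> b'" by (rule eKI) (use b' in simp_all)
    also have "\<dots> = eK \<cdot> (m \<cdot> i)" using i(4) by simp
    also have "\<dots> = (eK \<cdot> m) \<cdot> i" using i(1-3) by simp
    finally have yc: "y \<cdot> c' = (eK \<cdot> m) \<cdot> i" .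
    have "(eK \<cdot> m) \<cdot> (i \<cdot> f1) = ((eK \<cdot> m) \<cdot> i) \<cdot> f1" using i(1-3) by simp
    also have "\<dots> = (y \<cdot> c') \<cdot> f1" by (simp only: yc)
    also have "\<dots> = y \<cdot> (c' \<cdot> f1)" using y(1) by simp
    also have "\<dots> = y \<cdot> (c' \<cdot> f2)" by (simp only: cfe)
    also have "\<dots> = (y \<cdot> c') \<cdot> f2" using y(1) by simp
    also have "\<dots> = ((eK \<cdot> m) \<cdot> i) \<cdot> f2" by (simp only: yc)
    also have "\<dots> = (eK \<cdot> m) \<cdot> (i \<cdot> f2)" using i(1-3) by simp
    finally have "i \<cdot> f1 = i \<cdot> f2" using monicD[OF Mm, of "i \<cdot> f1" "i \<cdot> f2"] i(1-3) by simp
    then have "\<exists>u. arr u \<and> src u = trg c' \<and> trg u = trg i \<and> u \<cdot> c' = i"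
      using coeq_factor[OF cq, of i] i(1-3) by simp
    then obtain z where z: "arr z" "src z = src y" "trg z = I" "z \<cdot> c' = i"
      using i(1-3) by auto
    have "(eK \<cdot> m \<cdot> z) \<cdot> c' = eK \<cdot> m \<cdot> (z \<cdot> c')" using z(1-3) by simp
    also have "\<dots> = eK \<cdot> m \<cdot> i" by (simp only: z(4))
    also have "\<dots> = (eK \<cdot> m) \<cdot> i" using i(1-3) by simp
    also have "\<dots> = y \<cdot> c'" by (simp only: yc)
    finally have ce: "(eK \<cdot> m \<cdot> z) \<cdot> c' = y \<cdot> c'" .
    have ez: "arr (eK \<cdot> m \<cdot> z)" "src (eK \<cdot> m \<cdot> z) = trg c'" "trg (eK \<cdot> m \<cdot> z) = trg y" "src y = trg c'"
      using z(1-3) y(1) by simp_all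
    have "eK \<cdot> m \<cdot> z = y" by (rule coeq_epi[OF cq ez(1) y(1) ez(2) ez(4) ez(3) ce])
    then show "\<exists>u. arr u \<and> src u = src y \<and> trg u = src (eK \<cdot> m) \<and> (eK \<cdot> m) \<cdot> u = y"
      using z(1-3) by (intro exI[of _ z]) simp
  qed simp_all
  then show ?thesis unfolding normal_mono_def by blast
qed

lemma normal_monic: "normal_mono C m \<Longrightarrow> monic C m"
  unfolding normal_mono_def using ker_monic by blast

lemma za_eq: "zero_arrow C f \<Longrightarrow> src f = a \<Longrightarrow> trg f = b \<Longrightarrow> f = zr a b"
proof -
  assume a: "zero_arrow C f" "src f = a" "trg f = b"
  then have "arr f" unfolding zero_arrow_def by simp
  then show ?thesis using za_iff[of f a b] a by simp
qed

lemma zero_obj_map: "zero_obj C D \<Longrightarrow> arr p \<Longrightarrow> src p = D \<Longrightarrow> p = zr D (trg p)"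
proof -
  assume a: "zero_obj C D" "arr p" "src p = D"
  have D: "ob D" using a by auto
  have "idn D = zr D D" using zero_obj_iff[OF D] a(1) by simp
  then have "p \<cdot> idn D = p \<cdot> zr D D" by simp
  then show ?thesis using a D by simp
qed

lemma jointly_monic:
  assumes Kg: "is_kernel C g hK" and Km: "is_kernel C m hI" and tg: "trg g = trg m"
    and pz: "\<forall>p q. is_pullback C g m p q \<longrightarrow> zero_obj C (src p)"
  shows "\<And>x y. arr x \<Longrightarrow> arr y \<Longrightarrow> trg x = trg m \<Longrightarrow> trg y = trg m \<Longrightarrow> src x = src y \<Longrightarrow>
             hI \<cdot> x = hI \<cdot> y \<Longrightarrow> hK \<cdot> x = hK \<cdot> y \<Longrightarrow> x = y"
proof -
  define A where "A = trg m"
  have KG: "arr g" "arr hK" "trg g = A" "src hK = A" and gz: "hK \<cdot> g = zr (src g) (trg hK)"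
    using kerD[OF Kg] tg A_def by auto
  have KM: "arr m" "arr hI" "trg m = A" "src hI = A" and mz: "hI \<cdot> m = zr (src m) (trg hI)"
    using kerD[OF Km] A_def by auto
  have [simp]: "arr g" "arr hK" "trg g = A" "src hK = A" "arr m" "arr hI" "trg m = A" "src hI = A" "ob A"
    using KG KM by auto
  define CI where "CI = trg hI"
  define CK where "CK = trg hK"
  have [simp]: "trg hI = CI" "trg hK = CK" "ob CI" "ob CK" using CI_def CK_def by auto
  obtain q1 q2 where pb4: "is_pullback C (zr CI z0) (zr CK z0) q1 q2" using prod_exists[of CI CK] by auto
  define E where "E = src q1"
  have [simp]: "arr q1" "arr q2" "src q1 = E" "src q2 = E" "trg q1 = CI" "trg q2 = CK" "ob E"
    using pbD[OF pb4] E_def by auto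
  obtain G where G[simp]: "arr G" "src G = A" "trg G = E" and Ge: "q1 \<cdot> G = hI" "q2 \<cdot> G = hK"
    using prod_pair[OF pb4, of hI hK] by auto
  have Gx[simp]: "\<And>x. arr x \<Longrightarrow> trg x = A \<Longrightarrow> q1 \<cdot> (G \<cdot> x) = hI \<cdot> x"
     "\<And>x. arr x \<Longrightarrow> trg x = A \<Longrightarrow> q2 \<cdot> (G \<cdot> x) = hK \<cdot> x"
    using ext_eq[OF Ge(1)] ext_eq[OF Ge(2)] by simp_all
  have Gm: "monic C G"
  proof (rule trivker_monic)
    fix x assume x: "arr x" "trg x = src G" "G \<cdot> x = zr (src x) (trg G)"
    have xt[simp]: "trg x = A" using x by simp
    have "q1 \<cdot> (G \<cdot> x) = q1 \<cdot> zr (src x) E" "q2 \<cdot> (G \<cdot> x) = q2 \<cdot> zr (src x) E" using x(3) by simp_all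
    then have h1: "hI \<cdot> x = zr (src x) CI" and h2: "hK \<cdot> x = zr (src x) CK" using x(1) by simp_all
    obtain a where a: "arr a" "src a = src x" "trg a = src g" "g \<cdot> a = x"
      using ker_factor[OF Kg, of x] x(1) h2 by auto
    obtain b where b: "arr b" "src b = src x" "trg b = src m" "m \<cdot> b = x"
      using ker_factor[OF Km, of x] x(1) h1 by auto
    obtain p q where pb: "is_pullback C g m p q" using pb_exists[of g m] by auto
    have P: "arr p" "arr q" "trg p = src g" "trg q = src m" "src q = src p" using pbD[OF pb] by auto
    have "g \<cdot> a = m \<cdot> b" using a b by simp
    then have "\<exists>u. arr u \<and> src u = src a \<and> trg u = src p \<and> p \<cdot> u = a \<and> q \<cdot> u = b"
      by (intro pb_factor[OF pb]) (use a b in simp_all)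
    then obtain u where u: "arr u" "src u = src x" "trg u = src p" "p \<cdot> u = a" using a by auto
    have D: "zero_obj C (src p)" using pz pb by blast
    have pzr: "p = zr (src p) (src g)" using zero_obj_map[OF D P(1)] P by simp
    have "x = g \<cdot> (p \<cdot> u)" using a u by simp
    also have "\<dots> = g \<cdot> (zr (src p) (src g) \<cdot> u)" using pzr by simp
    also have "\<dots> = zr (src x) A" using u P x(1) by simp
    finally show "x = zr (src x) (src G)" by simp
  qed simp
  fix x y assume xy: "arr x" "arr y" "trg x = trg m" "trg y = trg m" "src x = src y" "hI \<cdot> x = hI \<cdot> y" "hK \<cdot> x = hK \<cdot> y"
  have xt[simp]: "trg x = A" "trg y = A" using xy by simp_all
  have "G \<cdot> x = G \<cdot> y"
  proof (rule pb_uniq[OF pb4])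
    show "q1 \<cdot> G \<cdot> x = q1 \<cdot> G \<cdot> y" using xy(1,2,6) by simp
    show "q2 \<cdot> G \<cdot> x = q2 \<cdot> G \<cdot> y" using xy(1,2,7) by simp
  qed (use xy(1,2,5) in simp_all)
  then show "x = y" using monicD[OF Gm, of x y] xy(1,2,5) by simp
qed

lemma step12: "essential_mono C m \<Longrightarrow> (\<forall>f\<in>Arr C. Dom C f = Cod C m \<and> normal_mono C (Comp C f m) \<longrightarrow> monic C f)"
  unfolding essential_mono_def using normal_monic by blast

lemma step31:
  assumes nm: "normal_mono C m" and H3: "\<forall>g. normal_mono C g \<and> perp C g m \<longrightarrow> zero_arrow C g"
  shows "essential_mono C m"
  unfolding essential_mono_def
proof (intro conjI ballI impI)
  show mm: "monic C m" using normal_monic[OF nm] .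
  have ma: "arr m" using mm unfolding monic_def by simp
  fix gg assume gg: "arr gg" "src gg = trg m \<and> monic C (gg \<cdot> m)"
  have gt: "src gg = trg m" and gm: "monic C (gg \<cdot> m)" using gg by simp_all
  obtain k where K: "is_kernel C k gg" using ker_exists[OF gg(1)] by blast
  have KD: "arr k" "trg k = src gg" "gg \<cdot> k = zr (src k) (trg gg)" using kerD[OF K] by simp_all
  have "perp C k m" unfolding perp_def
  proof (intro conjI allI impI)
    show "trg k = trg m" using KD gt by simp
    fix p q assume pb: "is_pullback C k m p q"
    have P: "arr p" "arr q" "trg p = src k" "trg q = src m" "src q = src p" and e: "k \<cdot> p = m \<cdot> q"
      using pbD[OF pb] by auto
    define D where "D = src p"
    have [simp]: "ob D" "src p = D" "src q = D" using P D_def by auto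
    have "(gg \<cdot> m) \<cdot> q = gg \<cdot> (m \<cdot> q)" using P ma gt gg(1) by simp
    also have "\<dots> = gg \<cdot> (k \<cdot> p)" using e by simp
    also have "\<dots> = (gg \<cdot> k) \<cdot> p" using P KD(1,2) gg(1) by simp
    also have "\<dots> = zr (src k) (trg gg) \<cdot> p" by (simp only: KD(3))
    also have "\<dots> = zr D (trg gg)" using KD P gg(1) by simp
    also have "\<dots> = (gg \<cdot> m) \<cdot> zr D (src m)" using ma gg(1) gt by simp
    finally have "q = zr D (src m)" using monicD[OF gm, of q "zr D (src m)"] P ma gg(1) gt by simp
    then have "k \<cdot> p = k \<cdot> zr D (src k)" using e ma KD gt P by simp
    then have pz: "p = zr D (src k)" using monicD[OF ker_monic[OF K], of p "zr D (src k)"] P KD by simp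
    have "idn D = zr D D"
    proof (rule pb_uniq[OF pb])
      show "p \<cdot> idn D = p \<cdot> zr D D" using pz P KD by simp
      show "q \<cdot> idn D = q \<cdot> zr D D" using \<open>q = zr D (src m)\<close> P ma by simp
    qed simp_all
    then show "zero_obj C (src p)" using zero_obj_iff by simp
  qed
  moreover have "normal_mono C k" unfolding normal_mono_def using K by blast
  ultimately have "zero_arrow C k" using H3 by blast
  then have kz: "k = zr (src k) (src gg)" using za_eq KD by simp
  show "monic C gg"
  proof (rule trivker_monic[OF gg(1)])
    fix x assume x: "arr x" "trg x = src gg" "gg \<cdot> x = zr (src x) (trg gg)"
    obtain u where u: "arr u" "src u = src x" "trg u = src k" "k \<cdot> u = x"
      using ker_factor[OF K, of x] x by auto
    have "x = zr (src k) (src gg) \<cdot> u" using u kz by simp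
    also have "\<dots> = zr (src x) (src gg)" using u gg(1) by simp
    finally show "x = zr (src x) (src gg)" .
  qed
qed

lemma step23:
  assumes nm: "normal_mono C m"
    and H2: "\<forall>f\<in>Arr C. Dom C f = Cod C m \<and> normal_mono C (Comp C f m) \<longrightarrow> monic C f"
    and ng: "normal_mono C g" and pp: "perp C g m"
  shows "zero_arrow C g"
proof -
  obtain hI where Km: "is_kernel C m hI" using nm unfolding normal_mono_def by blast
  obtain hK where Kg: "is_kernel C g hK" using ng unfolding normal_mono_def by blast
  have tg: "trg g = trg m" and pz: "\<forall>p q. is_pullback C g m p q \<longrightarrow> zero_obj C (src p)"
    using pp unfolding perp_def by auto
  define A where "A = trg m"
  note jm = jointly_monic[OF Kg Km tg pz]
  have KG: "arr g" "arr hK" "trg g = A" "src hK = A" and gz: "hK \<cdot> g = zr (src g) (trg hK)"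
    using kerD[OF Kg] tg A_def by auto
  have KM: "arr m" "arr hI" "trg m = A" "src hI = A"
    using kerD[OF Km] A_def by auto
  have [simp]: "ob A" "ob (trg hK)" using KG by auto
  obtain k1 k2 where pb2: "is_pullback C hK hK k1 k2" using pb_exists[of hK hK] KG by auto
  obtain eK where eK: "is_coequalizer C k1 k2 eK" using kp_coeq[OF pb2] by blast
  have P2: "arr k1" "arr k2" "trg k1 = A" "trg k2 = A" "src k2 = src k1" using pbD[OF pb2] KG by auto
  have EK: "arr eK" "src eK = A" and EKe: "eK \<cdot> k1 = eK \<cdot> k2" using coeqD[OF eK] P2 by auto
  have jmA: "\<And>x y. arr x \<Longrightarrow> arr y \<Longrightarrow> trg x = A \<Longrightarrow> trg y = A \<Longrightarrow> src x = src y \<Longrightarrow>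
             hI \<cdot> x = hI \<cdot> y \<Longrightarrow> hK \<cdot> x = hK \<cdot> y \<Longrightarrow> x = y"
    unfolding A_def using jm by blast
  have "normal_mono C (eK \<cdot> m)"
    by (rule normal_image[OF KM(2) KG(2) KM(4) KG(4) jmA Km pb2 eK])
  then have me: "monic C eK" using H2 EK KM by auto
  have "hK \<cdot> g = hK \<cdot> zr (src g) A" using gz KG by simp
  then have "\<exists>u. arr u \<and> src u = src g \<and> trg u = src k1 \<and> k1 \<cdot> u = g \<and> k2 \<cdot> u = zr (src g) A"
    by (intro pb_factor[OF pb2]) (use KG in simp_all)
  then obtain v where v: "arr v" "trg v = src k1" "k1 \<cdot> v = g" "k2 \<cdot> v = zr (src g) A" by blast
  have "eK \<cdot> g = eK \<cdot> (k1 \<cdot> v)" using v by simp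
  also have "\<dots> = (eK \<cdot> k1) \<cdot> v" using v P2 EK by simp
  also have "\<dots> = (eK \<cdot> k2) \<cdot> v" using EKe by simp
  also have "\<dots> = eK \<cdot> (k2 \<cdot> v)" using v P2 EK by simp
  also have "\<dots> = eK \<cdot> zr (src g) A" using v by simp
  finally have "g = zr (src g) A" using monicD[OF me, of g "zr (src g) A"] KG EK by simp
  then show ?thesis using zr_zero_arrow[of "src g" A] KG by simp
qed
end

theorem mainTheorem6:
  fixes C :: "('o, 'a) cat" and m :: 'a
  assumes "semi_abelian C"
    and "normal_mono C m"
  shows "(essential_mono C m \<longleftrightarrow>
            (\<forall>f\<in>Arr C. Dom C f = Cod C m \<and> normal_mono C (Comp C f m) \<longrightarrow> monic C f))
       \<and> ((\<forall>f\<in>Arr C. Dom C f = Cod C m \<and> normal_mono C (Comp C f m) \<longrightarrow> monic C f) \<longleftrightarrow>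
            (\<forall>g. normal_mono C g \<and> perp C g m \<longrightarrow> zero_arrow C g))"
proof -
  interpret sa C by (rule sa.intro) (rule assms(1))
  have i12: "essential_mono C m \<Longrightarrow>
      (\<forall>f\<in>Arr C. Dom C f = Cod C m \<and> normal_mono C (Comp C f m) \<longrightarrow> monic C f)"
    by (rule step12)
  have i23: "(\<forall>f\<in>Arr C. Dom C f = Cod C m \<and> normal_mono C (Comp C f m) \<longrightarrow> monic C f) \<Longrightarrow>
      (\<forall>g. normal_mono C g \<and> perp C g m \<longrightarrow> zero_arrow C g)"
    using step23[OF assms(2)] by blast
  have i31: "(\<forall>g. normal_mono C g \<and> perp C g m \<longrightarrow> zero_arrow C g) \<Longrightarrow> essential_mono C m"
    by (rule step31[OF assms(2)])
  show ?thesis using i12 i23 i31 by blast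
qed

end
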